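(* Let $G=(V,E,w)$ be a strongly connected graph on $n$ nodes with symmetric weights, and let $\pi_i$, $p_{ij}$ and $\psi_{ij}$ be as defined in the context (none of which depend on $S$). Define $h(j)=\sum_{i,l\in V}\pi_i\,p_{ij}\,p_{jl}\,\psi_{il}$ for $j\in V$. Then for every $S\subseteq V$, $\operatorname{fp}'(G^S,0)=\frac1n\sum_{j\in S}h(j)$. In particular, for each $k$, any set consisting of $k$ nodes with the largest values of $h$ maximizes $\operatorname{fp}'(G^S,0)$ over all $S\subseteq V$ with $|S|=k$.
   Context: Positional Voter model. A graph $G=(V,E,w)$ has node set $V$ with $|V|=n$, edge set $E\subseteq V\times V$ and weights $w\colon E\to\mathbb{R}_{>0}$; $\operatorname{in}(u)=\{v\in V:(v,u)\in E\}$; symmetric weights means $(i,j)\in E\iff(j,i)\in E$ and $w(i,j)=w(j,i)$. A configuration is a set $X\subseteq V$ (the nodes carrying the novel trait $A$). Given a biased set $S\subseteq V$ and bias $\delta\ge 0$, define $f^S_X(v\mid u)=1+\delta$ if $v\in X$ and $u\in S$, and $1$ otherwise. The process $(\mathcal{X}_t)_{t\ge0}$: given $\mathcal{X}_t=X$, a node $u$ is chosen uniformly at random from $V$, then $v\in\operatorname{in}(u)$ is chosen with probability $\frac{f^S_X(v\mid u)\,w(v,u)}{\sum_{x\in\operatorname{in}(u)} f^S_X(x\mid u)\,w(x,u)}$, and $\mathcal{X}_{t+1}=X\cup\{u\}$ if $v\in X$, $\mathcal{X}_{t+1}=X\setminus\{u\}$ otherwise. Define $\operatorname{fp}(G^S,\delta,X)=\mathbb{P}[\exists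 t\ge0:\mathcal{X}_t=V\mid\mathcal{X}_0=X]$, $\operatorname{fp}(G^S,\delta)=\frac1n\sum_{u\in V}\operatorname{fp}(G^S,\delta,\{u\})$, and $\operatorname{fp}'(G^S,0)=\frac{d}{d\delta}\big|_{\delta=0}\operatorname{fp}(G^S,\delta)$. Write $w(i,j)=0$ if $(i,j)\notin E$ and $p_{ij}=\frac{w(i,j)}{\sum_{l\in V}w(i,l)}$. Let $\pi_i=\operatorname{fp}(G^S,0,\{i\})$ (the unbiased fixation probability from $\{i\}$, independent of $S$ since $\delta=0$), and let $(\psi_{ij})_{i,j\in V}$ be the solution of $\psi_{ii}=0$ and $\psi_{ij}=\frac{1+\sum_{l\in V}(p_{il}\psi_{lj}+p_{jl}\psi_{il})}{2}$ for $i\ne j$. *)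

theory Defs
  imports "HOL-Analysis.Analysis"
begin

definition w0 :: "('v \<times> 'v) set \<Rightarrow> ('v \<Rightarrow> 'v \<Rightarrow> real) \<Rightarrow> 'v \<Rightarrow> 'v \<Rightarrow> real" where
  "w0 E w i j = (if (i, j) \<in> E then w i j else 0)"

definition in_nbrs :: "'v set \<Rightarrow> ('v \<times> 'v) set \<Rightarrow> 'v \<Rightarrow> 'v set" where
  "in_nbrs V E u = {v \<in> V. (v, u) \<in> E}"

definition wgraph :: "'v set \<Rightarrow> ('v \<times> 'v) set \<Rightarrow> ('v \<Rightarrow> 'v \<Rightarrow> real) \<Rightarrow> bool" where
  "wgraph V E w \<longleftrightarrow> finite V \<and> V \<noteq> {} \<and> E \<subseteq> V \<times> V \<and> (\<forall>e\<in>E. w (fst e) (snd e) > 0)"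

definition strongly_connected :: "'v set \<Rightarrow> ('v \<times> 'v) set \<Rightarrow> bool" where
  "strongly_connected V E \<longleftrightarrow> (\<forall>u\<in>V. \<forall>v\<in>V. (u, v) \<in> E\<^sup>*)"

definition symmetric_weights :: "('v \<times> 'v) set \<Rightarrow> ('v \<Rightarrow> 'v \<Rightarrow> real) \<Rightarrow> bool" where
  "symmetric_weights E w \<longleftrightarrow> (\<forall>i j. (i, j) \<in> E \<longleftrightarrow> (j, i) \<in> E) \<and> (\<forall>i j. (i, j) \<in> E \<longrightarrow> w i j = w j i)"

definition fbias :: "'v set \<Rightarrow> real \<Rightarrow> 'v set \<Rightarrow> 'v \<Rightarrow> 'v \<Rightarrow> real" where
  "fbias S \<delta> X v u = (if v \<in> X \<and> u \<in> S then 1 + \<delta> else 1)"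

definition choice_prob :: "'v set \<Rightarrow> ('v \<times> 'v) set \<Rightarrow> ('v \<Rightarrow> 'v \<Rightarrow> real) \<Rightarrow> 'v set \<Rightarrow> real
    \<Rightarrow> 'v set \<Rightarrow> 'v \<Rightarrow> 'v \<Rightarrow> real" where
  "choice_prob V E w S \<delta> X u v =
     fbias S \<delta> X v u * w v u / (\<Sum>x\<in>in_nbrs V E u. fbias S \<delta> X x u * w x u)"

definition next_config :: "'v set \<Rightarrow> 'v \<Rightarrow> 'v \<Rightarrow> 'v set" where
  "next_config X u v = (if v \<in> X then insert u X else X - {u})"

text \<open>hit_prob t X = P[exists s \<le> t. X_s = V | X_0 = X], by first-step analysis.\<close>
fun hit_prob :: "'v set \<Rightarrow> ('v \<times> 'v) set \<Rightarrow> ('v \<Rightarrow> 'v \<Rightarrow> real) \<Rightarrow> 'v set \<Rightarrow> real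
    \<Rightarrow> nat \<Rightarrow> 'v set \<Rightarrow> real" where
  "hit_prob V E w S \<delta> 0 X = (if X = V then 1 else 0)"
| "hit_prob V E w S \<delta> (Suc t) X = (if X = V then 1 else
     (\<Sum>u\<in>V. \<Sum>v\<in>in_nbrs V E u. (1 / real (card V)) * choice_prob V E w S \<delta> X u v
        * hit_prob V E w S \<delta> t (next_config X u v)))"

text \<open>fp(G^S, delta, X) = P[exists t. X_t = V | X_0 = X] = lim_t P[exists s \<le> t. X_s = V].\<close>
definition fp_from :: "'v set \<Rightarrow> ('v \<times> 'v) set \<Rightarrow> ('v \<Rightarrow> 'v \<Rightarrow> real) \<Rightarrow> 'v set \<Rightarrow> real
    \<Rightarrow> 'v set \<Rightarrow> real" where
  "fp_from V E w S \<delta> X = lim (\<lambda>t. hit_prob V E w S \<delta> t X)"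

definition fp :: "'v set \<Rightarrow> ('v \<times> 'v) set \<Rightarrow> ('v \<Rightarrow> 'v \<Rightarrow> real) \<Rightarrow> 'v set \<Rightarrow> real \<Rightarrow> real" where
  "fp V E w S \<delta> = (1 / real (card V)) * (\<Sum>u\<in>V. fp_from V E w S \<delta> {u})"

definition fp_deriv0 :: "'v set \<Rightarrow> ('v \<times> 'v) set \<Rightarrow> ('v \<Rightarrow> 'v \<Rightarrow> real) \<Rightarrow> 'v set \<Rightarrow> real" where
  "fp_deriv0 V E w S = (THE D. ((\<lambda>\<delta>. fp V E w S \<delta>) has_real_derivative D) (at 0 within {0..}))"

definition pmat :: "'v set \<Rightarrow> ('v \<times> 'v) set \<Rightarrow> ('v \<Rightarrow> 'v \<Rightarrow> real) \<Rightarrow> 'v \<Rightarrow> 'v \<Rightarrow> real" where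
  "pmat V E w i j = w0 E w i j / (\<Sum>l\<in>V. w0 E w i l)"

text \<open>pi_i: unbiased fixation probability from {i} (delta = 0, so S is irrelevant).\<close>
definition piv :: "'v set \<Rightarrow> ('v \<times> 'v) set \<Rightarrow> ('v \<Rightarrow> 'v \<Rightarrow> real) \<Rightarrow> 'v \<Rightarrow> real" where
  "piv V E w i = fp_from V E w {} 0 {i}"

definition psi :: "'v set \<Rightarrow> ('v \<times> 'v) set \<Rightarrow> ('v \<Rightarrow> 'v \<Rightarrow> real) \<Rightarrow> 'v \<Rightarrow> 'v \<Rightarrow> real" where
  "psi V E w = (THE \<psi>. (\<forall>i j. (i \<notin> V \<or> j \<notin> V) \<longrightarrow> \<psi> i j = 0)
      \<and> (\<forall>i\<in>V. \<psi> i i = 0)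
      \<and> (\<forall>i\<in>V. \<forall>j\<in>V. i \<noteq> j \<longrightarrow>
           \<psi> i j = (1 + (\<Sum>l\<in>V. pmat V E w i l * \<psi> l j + pmat V E w j l * \<psi> i l)) / 2))"

definition hfun :: "'v set \<Rightarrow> ('v \<times> 'v) set \<Rightarrow> ('v \<Rightarrow> 'v \<Rightarrow> real) \<Rightarrow> 'v \<Rightarrow> real" where
  "hfun V E w j = (\<Sum>i\<in>V. \<Sum>l\<in>V. piv V E w i * pmat V E w i j * pmat V E w j l * psi V E w i l)"

end

theory Submission
  imports Defs
begin


fun reach :: "'s set \<Rightarrow> ('s \<Rightarrow> 'k set) \<Rightarrow> ('s \<Rightarrow> 'k \<Rightarrow> real) \<Rightarrow> ('s \<Rightarrow> 'k \<Rightarrow> 's) \<Rightarrow> real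
    \<Rightarrow> nat \<Rightarrow> 's \<Rightarrow> bool" where
  "reach B I c f \<eta> 0 x = (x \<in> B)"
| "reach B I c f \<eta> (Suc k) x = (x \<in> B \<or> (\<exists>j\<in>I x. \<eta> \<le> c x j \<and> reach B I c f \<eta> k (f x j)))"

lemma reach_Suc: "reach B I c f \<eta> k x \<Longrightarrow> reach B I c f \<eta> (Suc k) x"
  by (induction k arbitrary: x) auto

lemma reach_mono: "reach B I c f \<eta> k x \<Longrightarrow> k \<le> m \<Longrightarrow> reach B I c f \<eta> m x"
proof -
  assume r: "reach B I c f \<eta> k x" and "k \<le> m"
  then obtain d where m: "m = k + d" using le_Suc_ex by blast
  have "reach B I c f \<eta> (k + d) x" for d by (induction d) (use r reach_Suc in \<open>auto simp del: reach.simps(2)\<close>)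
  then show ?thesis using m by simp
qed

lemma reach_B: "x \<in> B \<Longrightarrow> reach B I c f \<eta> k x"
  by (cases k) auto

lemma reach_uniform:
  assumes "finite St" "\<And>x. x \<in> St \<Longrightarrow> \<exists>k. reach B I c f \<eta> k x"
  shows "\<exists>L. \<forall>x\<in>St. reach B I c f \<eta> L x"
  using assms
proof (induction St rule: finite_induct)
  case empty then show ?case by auto
next
  case (insert a F)
  then obtain L where L: "\<forall>x\<in>F. reach B I c f \<eta> L x" by auto
  obtain k where k: "reach B I c f \<eta> k a" using insert by auto
  have "\<forall>x\<in>insert a F. reach B I c f \<eta> (L + k) x"
    using L k reach_mono by (metis insert_iff le_add1 le_add2)
  then show ?case by blast
qed

lemma maxp_upper:
  fixes r :: "'s \<Rightarrow> real"
  assumes fin: "finite St"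
    and kern: "\<And>x. x \<in> St - B \<Longrightarrow> finite (I x) \<and> (\<forall>j\<in>I x. 0 \<le> c x j \<and> f x j \<in> St) \<and> sum (c x) (I x) \<le> 1"
    and bnd: "\<And>x. x \<in> B \<Longrightarrow> r x \<le> 0"
    and eq: "\<And>x. x \<in> St - B \<Longrightarrow> r x \<le> (\<Sum>j\<in>I x. c x j * r (f x j)) + \<sigma>"
    and rch: "\<And>x. x \<in> St \<Longrightarrow> reach B I c f \<eta> L x"
    and eta: "0 < \<eta>" "\<eta> \<le> 1" and sig: "0 \<le> \<sigma>"
    and x: "x \<in> St"
  shows "r x \<le> L * \<sigma> / \<eta> ^ L"
proof -
  define M where "M = Max (insert 0 (r ` St))"
  have M0: "0 \<le> M" unfolding M_def using fin by simp
  have rM: "\<And>y. y \<in> St \<Longrightarrow> r y \<le> M" unfolding M_def using fin by simp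
  have claim: "\<forall>y\<in>St. reach B I c f \<eta> k y \<longrightarrow> r y \<le> (1 - \<eta>^k) * M + k * \<sigma>" for k
  proof (induction k)
    case 0 then show ?case using bnd by auto
  next
    case (Suc k)
    show ?case
    proof (intro ballI impI)
      fix y assume yS: "y \<in> St" and ry: "reach B I c f \<eta> (Suc k) y"
      have pk: "\<eta>^(Suc k) \<le> 1" using eta by (intro power_le_one) auto
      show "r y \<le> (1 - \<eta>^(Suc k)) * M + real (Suc k) * \<sigma>"
      proof (cases "y \<in> B")
        case True
        then have "r y \<le> 0" by (rule bnd)
        moreover have "0 \<le> (1 - \<eta>^(Suc k)) * M + real (Suc k) * \<sigma>"
          using pk M0 sig by simp
        ultimately show ?thesis by linarith
      next
        case False
        with ry obtain j where j: "j \<in> I y" "\<eta> \<le> c y j" "reach B I c f \<eta> k (f y j)" by auto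
        have yB: "y \<in> St - B" using yS False by auto
        note kk = kern[OF yB]
        have fyS: "f y j \<in> St" using kk j by auto
        have IH: "r (f y j) \<le> (1 - \<eta>^k) * M + k * \<sigma>" using Suc fyS j by auto
        have split: "(\<Sum>i\<in>I y. c y i * r (f y i)) = c y j * r (f y j) + (\<Sum>i\<in>I y - {j}. c y i * r (f y i))"
          using kk j by (simp add: sum.remove)
        have "(\<Sum>i\<in>I y - {j}. c y i * r (f y i)) \<le> (\<Sum>i\<in>I y - {j}. c y i * M)"
          using kk by (intro sum_mono mult_left_mono rM) auto
        also have "\<dots> = (\<Sum>i\<in>I y - {j}. c y i) * M" by (simp add: sum_distrib_right)
        also have "(\<Sum>i\<in>I y - {j}. c y i) = sum (c y) (I y) - c y j"
          using kk j by (simp add: sum_diff1)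
        finally have rest: "(\<Sum>i\<in>I y - {j}. c y i * r (f y i)) \<le> (1 - c y j) * M"
          using kk M0 by (smt (verit) mult_right_mono)
        have "r y \<le> c y j * r (f y j) + (1 - c y j) * M + \<sigma>"
          using eq[OF yB] split rest by linarith
        also have "c y j * r (f y j) + (1 - c y j) * M = M - c y j * (M - r (f y j))"
          by (simp add: algebra_simps)
        finally have A: "r y \<le> M - c y j * (M - r (f y j)) + \<sigma>" .
        have B: "c y j * (M - r (f y j)) \<ge> \<eta> * (M - r (f y j))"
          using j rM[OF fyS] by (intro mult_right_mono) auto
        have C: "\<eta> * (M - r (f y j)) \<ge> \<eta> * (\<eta>^k * M - k * \<sigma>)"
          using IH eta by (intro mult_left_mono) (auto simp: algebra_simps)
        have D: "\<eta> * (\<eta>^k * M - k * \<sigma>) = \<eta>^(Suc k) * M - \<eta> * k * \<sigma>" by (simp add: algebra_simps)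
        have F: "\<eta> * k * \<sigma> \<le> k * \<sigma>"
          using mult_left_le_one_le[of "real k * \<sigma>" \<eta>] eta sig by (simp add: mult.assoc)
        have "r y \<le> M - (\<eta>^(Suc k) * M - \<eta> * k * \<sigma>) + \<sigma>" using A B C D by linarith
        then show ?thesis using F by (simp add: algebra_simps)
      qed
    qed
  qed
  have etaL: "0 < \<eta>^L" using eta by simp
  have "M \<le> L * \<sigma> / \<eta>^L"
  proof (cases "M = 0")
    case True then show ?thesis using sig etaL by simp
  next
    case False
    have "M \<in> insert 0 (r ` St)" unfolding M_def using fin by (intro Max_in) auto
    with False obtain x0 where x0: "x0 \<in> St" "M = r x0" by auto
    have "M \<le> (1 - \<eta>^L) * M + L * \<sigma>" using claim x0 rch by auto
    then have "\<eta>^L * M \<le> L * \<sigma>" by (simp add: algebra_simps)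
    then show ?thesis using etaL by (simp add: field_simps mult.commute)
  qed
  then show ?thesis using rM[OF x] by linarith
qed

lemma maxp_abs:
  fixes r :: "'s \<Rightarrow> real"
  assumes fin: "finite St"
    and kern: "\<And>x. x \<in> St - B \<Longrightarrow> finite (I x) \<and> (\<forall>j\<in>I x. 0 \<le> c x j \<and> f x j \<in> St) \<and> sum (c x) (I x) \<le> 1"
    and bnd: "\<And>x. x \<in> B \<Longrightarrow> r x = 0"
    and eq: "\<And>x. x \<in> St - B \<Longrightarrow> r x = (\<Sum>j\<in>I x. c x j * r (f x j)) + s x"
    and sb: "\<And>x. x \<in> St - B \<Longrightarrow> \<bar>s x\<bar> \<le> \<sigma>"
    and rch: "\<And>x. x \<in> St \<Longrightarrow> reach B I c f \<eta> L x"
    and eta: "0 < \<eta>" "\<eta> \<le> 1" and sig: "0 \<le> \<sigma>"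
    and x: "x \<in> St"
  shows "\<bar>r x\<bar> \<le> L * \<sigma> / \<eta> ^ L"
proof -
  note s0 = sig
    have u: "r x \<le> L * \<sigma> / \<eta> ^ L"
      by (rule maxp_upper[OF fin kern _ _ rch eta s0 x]) (use bnd eq sb in \<open>force+\<close>)
    have l: "- r x \<le> L * \<sigma> / \<eta> ^ L"
    proof (rule maxp_upper[where r = "\<lambda>x. - r x", OF fin kern _ _ rch eta s0 x])
      show "- r y \<le> 0" if "y \<in> B" for y using bnd[OF that] by simp
      show "- r y \<le> (\<Sum>j\<in>I y. c y j * - r (f y j)) + \<sigma>" if "y \<in> St - B" for y
        using eq[OF that] sb[OF that] by (simp add: sum_negf)
    qed auto
    show ?thesis using u l by linarith
qed

fun iter :: "'s set \<Rightarrow> ('s \<Rightarrow> 'k set) \<Rightarrow> ('s \<Rightarrow> 'k \<Rightarrow> real) \<Rightarrow> ('s \<Rightarrow> 'k \<Rightarrow> 's) \<Rightarrow> ('s \<Rightarrow> real)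
    \<Rightarrow> nat \<Rightarrow> 's \<Rightarrow> real" where
  "iter T I c f s 0 x = 0"
| "iter T I c f s (Suc t) x = (if x \<in> T then (\<Sum>j\<in>I x. c x j * iter T I c f s t (f x j)) + s x else 0)"

declare iter.simps(2)[simp del]

lemma iter_in: "x \<in> T \<Longrightarrow> iter T I c f s (Suc t) x = (\<Sum>j\<in>I x. c x j * iter T I c f s t (f x j)) + s x"
  by (simp add: iter.simps(2))

lemma iter_out: "x \<notin> T \<Longrightarrow> iter T I c f s t x = 0"
  by (cases t) (simp_all add: iter.simps(2))

lemma exist_sol:
  fixes s :: "'s \<Rightarrow> real"
  assumes fin: "finite St"
    and kern: "\<And>x. x \<in> St - B \<Longrightarrow> finite (I x) \<and> (\<forall>j\<in>I x. 0 \<le> c x j \<and> f x j \<in> St) \<and> sum (c x) (I x) \<le> 1"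
    and spos: "\<And>x. x \<in> St - B \<Longrightarrow> 0 \<le> s x"
    and rch: "\<And>x. x \<in> St \<Longrightarrow> \<exists>k. reach B I c f \<eta> k x"
    and eta: "0 < \<eta>" "\<eta> \<le> 1"
  shows "\<exists>R. (\<forall>x. x \<notin> St - B \<longrightarrow> R x = 0) \<and> (\<forall>x\<in>St - B. R x = (\<Sum>j\<in>I x. c x j * R (f x j)) + s x)"
proof -
  obtain L where L: "\<And>x. x \<in> St \<Longrightarrow> reach B I c f \<eta> L x"
    using reach_uniform[OF fin rch] by blast
  define \<sigma> where "\<sigma> = Max (insert 0 (s ` (St - B)))"
  have sig: "0 \<le> \<sigma>" unfolding \<sigma>_def using fin by simp
  have sle: "x \<in> St - B \<Longrightarrow> s x \<le> \<sigma>" for x unfolding \<sigma>_def using fin by simp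
  let ?it = "iter (St - B) I c f s"
  have mono: "?it t x \<le> ?it (Suc t) x" for t x
  proof (induction t arbitrary: x)
    case 0 then show ?case using spos by (cases "x \<in> St - B") (simp_all add: iter_in iter_out)
  next
    case (Suc t)
    show ?case
    proof (cases "x \<in> St - B")
      case True
      have "(\<Sum>j\<in>I x. c x j * ?it t (f x j)) \<le> (\<Sum>j\<in>I x. c x j * ?it (Suc t) (f x j))"
        by (intro sum_mono mult_left_mono Suc.IH) (use kern[OF True] in auto)
      then show ?thesis using True by (simp add: iter_in)
    next
      case False then show ?thesis by (simp add: iter_out)
    qed
  qed
  have zero: "x \<notin> St - B \<Longrightarrow> ?it t x = 0" for t x by (rule iter_out)
  have bound: "?it t x \<le> L * \<sigma> / \<eta> ^ L" if x: "x \<in> St" for t x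
  proof (rule maxp_upper[OF fin kern _ _ L eta sig x])
    show "?it t y \<le> 0" if "y \<in> B" for y using zero that by simp
    show "?it t y \<le> (\<Sum>j\<in>I y. c y j * ?it t (f y j)) + \<sigma>" if y: "y \<in> St - B" for y
      using mono[of t y] y sle[OF y] by (simp add: iter_in)
  qed auto
  have conv: "\<exists>l. (\<lambda>t. ?it t x) \<longlonglongrightarrow> l" for x
  proof -
    have inc: "incseq (\<lambda>t. ?it t x)" using mono by (simp add: incseq_SucI)
    have "bdd_above (range (\<lambda>t. ?it t x))"
    proof (cases "x \<in> St")
      case True then show ?thesis using bound[OF True] by (intro bdd_aboveI2[where M="L * \<sigma> / \<eta> ^ L"]) auto
    next
      case False then show ?thesis using zero by (intro bdd_aboveI2[where M=0]) auto
    qed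
    then show ?thesis using LIMSEQ_incseq_SUP inc by blast
  qed
  define R where "R x = lim (\<lambda>t. ?it t x)" for x
  have lim: "(\<lambda>t. ?it t x) \<longlonglongrightarrow> R x" for x
    unfolding R_def using conv convergent_LIMSEQ_iff convergent_def by blast
  show ?thesis
  proof (intro exI conjI allI impI ballI)
    fix x assume "x \<notin> St - B"
    then have "(\<lambda>t. ?it t x) \<longlonglongrightarrow> 0" using zero by simp
    then show "R x = 0" using lim LIMSEQ_unique by blast
  next
    fix x assume x: "x \<in> St - B"
    have "(\<lambda>t. ?it (Suc t) x) \<longlonglongrightarrow> R x" using lim LIMSEQ_Suc by blast
    moreover have "(\<lambda>t. ?it (Suc t) x) = (\<lambda>t. (\<Sum>j\<in>I x. c x j * ?it t (f x j)) + s x)"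
      using x by (simp add: iter_in)
    moreover have "(\<lambda>t. (\<Sum>j\<in>I x. c x j * ?it t (f x j)) + s x) \<longlonglongrightarrow> (\<Sum>j\<in>I x. c x j * R (f x j)) + s x"
      by (intro tendsto_intros lim)
    ultimately show "R x = (\<Sum>j\<in>I x. c x j * R (f x j)) + s x" using LIMSEQ_unique by metis
  qed
qed


locale vgraph =
  fixes V :: "'v set" and E :: "('v \<times> 'v) set" and w :: "'v \<Rightarrow> 'v \<Rightarrow> real"
  assumes wg: "wgraph V E w" and sc: "strongly_connected V E" and sym: "symmetric_weights E w"
begin

lemma finV: "finite V" and Vne: "V \<noteq> {}" and EV: "E \<subseteq> V \<times> V"
  and wpos: "(i, j) \<in> E \<Longrightarrow> 0 < w i j"
  using wg unfolding wgraph_def by auto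

lemma Esym: "(i, j) \<in> E \<longleftrightarrow> (j, i) \<in> E" and wsym: "(i, j) \<in> E \<Longrightarrow> w i j = w j i"
  using sym unfolding symmetric_weights_def by auto

abbreviation "W0 \<equiv> w0 E w"
abbreviation "P \<equiv> pmat V E w"

definition deg :: "'v \<Rightarrow> real" where "deg i = (\<Sum>l\<in>V. W0 i l)"

lemma w0_nonneg: "0 \<le> W0 i j"
  unfolding w0_def using wpos by (auto simp: less_imp_le)

lemma w0_sym: "W0 i j = W0 j i"
  unfolding w0_def using Esym wsym by auto

lemma w0_pos: "(i, j) \<in> E \<Longrightarrow> 0 < W0 i j"
  unfolding w0_def using wpos by auto

lemma w0_out: "(i, j) \<notin> E \<Longrightarrow> W0 i j = 0"
  unfolding w0_def by auto

lemma deg_nonneg: "0 \<le> deg i"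
  unfolding deg_def by (intro sum_nonneg w0_nonneg)

lemma P_def': "P i j = W0 i j / deg i"
  unfolding pmat_def deg_def by simp

lemma P_nonneg: "0 \<le> P i j"
  unfolding P_def' using w0_nonneg deg_nonneg by simp

lemma P_rowsum_le: "(\<Sum>l\<in>V. P i l) \<le> 1"
  unfolding P_def' by (simp add: sum_divide_distrib[symmetric] deg_def[symmetric])

lemma deg_pos_E: "(i, j) \<in> E \<Longrightarrow> 0 < deg i"
proof -
  assume e: "(i, j) \<in> E"
  then have j: "j \<in> V" using EV by auto
  have "W0 i j \<le> deg i" unfolding deg_def
    by (rule member_le_sum) (use j w0_nonneg finV in auto)
  then show ?thesis using w0_pos[OF e] by linarith
qed

lemma P_pos: "(i, j) \<in> E \<Longrightarrow> 0 < P i j"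
  unfolding P_def' using w0_pos deg_pos_E by simp

definition St2 :: "('v \<times> 'v) set" where "St2 = V \<times> V"
definition B2 :: "('v \<times> 'v) set" where "B2 = {p. fst p = snd p}"
definition I2 :: "'v \<times> 'v \<Rightarrow> (bool \<times> 'v) set" where "I2 x = UNIV \<times> V"
definition c2 :: "'v \<times> 'v \<Rightarrow> bool \<times> 'v \<Rightarrow> real" where
  "c2 x k = (if fst k then P (fst x) (snd k) else P (snd x) (snd k)) / 2"
definition f2 :: "'v \<times> 'v \<Rightarrow> bool \<times> 'v \<Rightarrow> 'v \<times> 'v" where
  "f2 x k = (if fst k then (snd k, snd x) else (fst x, snd k))"
definition eta2 :: real where "eta2 = Min (insert 1 ((\<lambda>e. P (fst e) (snd e) / 2) ` E))"

lemma finE: "finite E" using finite_subset[OF EV] finV by auto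

lemma eta2_pos: "0 < eta2" and eta2_le1: "eta2 \<le> 1"
  and eta2_le: "(i, j) \<in> E \<Longrightarrow> eta2 \<le> P i j / 2"
proof -
  show "0 < eta2" unfolding eta2_def using finE P_pos by (subst Min_gr_iff) auto
  show "eta2 \<le> 1" unfolding eta2_def using finE by simp
  show "(i, j) \<in> E \<Longrightarrow> eta2 \<le> P i j / 2" unfolding eta2_def using finE
    by (intro Min_le) force+
qed

lemma sum2: "(\<Sum>k\<in>I2 (i, j). c2 (i, j) k * g (f2 (i, j) k))
   = ((\<Sum>l\<in>V. P i l * g (l, j)) + (\<Sum>l\<in>V. P j l * g (i, l))) / 2"
proof -
  have "(\<Sum>k\<in>I2 (i, j). c2 (i, j) k * g (f2 (i, j) k))
      = (\<Sum>b\<in>UNIV. \<Sum>l\<in>V. c2 (i, j) (b, l) * g (f2 (i, j) (b, l)))"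
    unfolding I2_def by (simp add: sum.cartesian_product)
  also have "\<dots> = (\<Sum>l\<in>V. P i l / 2 * g (l, j)) + (\<Sum>l\<in>V. P j l / 2 * g (i, l))"
    by (simp add: UNIV_bool c2_def f2_def add.commute)
  finally show ?thesis by (simp add: sum_divide_distrib[symmetric] add_divide_distrib)
qed

lemma kern2: "x \<in> St2 - B2 \<Longrightarrow> finite (I2 x) \<and> (\<forall>j\<in>I2 x. 0 \<le> c2 x j \<and> f2 x j \<in> St2) \<and> sum (c2 x) (I2 x) \<le> 1"
proof -
  assume x: "x \<in> St2 - B2"
  obtain i j where ij: "x = (i, j)" by force
  have "sum (c2 x) (I2 x) = ((\<Sum>l\<in>V. P i l) + (\<Sum>l\<in>V. P j l)) / 2"
    using sum2[of i j "\<lambda>_. 1"] ij by simp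
  also have "\<dots> \<le> 1" using P_rowsum_le[of i] P_rowsum_le[of j] by simp
  finally show ?thesis using x ij finV
    by (auto simp: I2_def c2_def f2_def St2_def P_nonneg)
qed

lemma reach2: "x \<in> St2 \<Longrightarrow> \<exists>k. reach B2 I2 c2 f2 eta2 k x"
proof -
  assume x: "x \<in> St2"
  obtain i j where ij: "x = (i, j)" and i: "i \<in> V" and j: "j \<in> V" using x St2_def by auto
  have "(i, j) \<in> E\<^sup>*" using sc i j unfolding strongly_connected_def by auto
  then have "\<exists>k. reach B2 I2 c2 f2 eta2 k (i, j)"
  proof (induction rule: converse_rtrancl_induct)
    case base
    have "reach B2 I2 c2 f2 eta2 0 (j, j)" by (simp add: B2_def)
    then show ?case by blast
  next
    case (step y z)
    then obtain k where k: "reach B2 I2 c2 f2 eta2 k (z, j)" by blast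
    have zV: "z \<in> V" using step EV by auto
    have "(True, z) \<in> I2 (y, j)" using zV by (simp add: I2_def)
    moreover have "eta2 \<le> c2 (y, j) (True, z)" using eta2_le[OF step(1)] by (simp add: c2_def)
    moreover have "f2 (y, j) (True, z) = (z, j)" by (simp add: f2_def)
    ultimately have "reach B2 I2 c2 f2 eta2 (Suc k) (y, j)" using k by auto
    then show ?case by blast
  qed
  then show ?thesis using ij by simp
qed

lemma finSt2: "finite St2" unfolding St2_def using finV by simp

lemma pair_exist:
  assumes "\<And>x. x \<in> St2 - B2 \<Longrightarrow> 0 \<le> s x"
  shows "\<exists>R. (\<forall>x. x \<notin> St2 - B2 \<longrightarrow> R x = 0) \<and>
     (\<forall>x\<in>St2 - B2. R x = (\<Sum>j\<in>I2 x. c2 x j * R (f2 x j)) + s x)"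
  by (rule exist_sol[OF finSt2 kern2 assms reach2 eta2_pos eta2_le1])

lemma pair_unique:
  assumes "\<forall>x. x \<notin> St2 - B2 \<longrightarrow> R x = 0" "\<forall>x\<in>St2 - B2. R x = (\<Sum>j\<in>I2 x. c2 x j * R (f2 x j))"
  shows "R x = 0"
proof (cases "x \<in> St2")
  case True
  obtain L where L: "\<And>x. x \<in> St2 \<Longrightarrow> reach B2 I2 c2 f2 eta2 L x"
    using reach_uniform[OF finSt2 reach2] by blast
  have "\<bar>R x\<bar> \<le> L * (0::real) / eta2 ^ L"
    by (rule maxp_abs[where s = "\<lambda>_. 0", OF finSt2 kern2 _ _ _ L eta2_pos eta2_le1 _ True])
      (use assms in auto)
  then show ?thesis by simp
next
  case False then show ?thesis using assms(1) by blast
qed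

definition psi_prop :: "('v \<Rightarrow> 'v \<Rightarrow> real) \<Rightarrow> bool" where
  "psi_prop \<psi> \<longleftrightarrow> (\<forall>i j. (i \<notin> V \<or> j \<notin> V) \<longrightarrow> \<psi> i j = 0)
      \<and> (\<forall>i\<in>V. \<psi> i i = 0)
      \<and> (\<forall>i\<in>V. \<forall>j\<in>V. i \<noteq> j \<longrightarrow>
           \<psi> i j = (1 + (\<Sum>l\<in>V. P i l * \<psi> l j + P j l * \<psi> i l)) / 2)"

lemma psi_prop_iff: "psi_prop \<psi> \<longleftrightarrow> ((\<forall>x. x \<notin> St2 - B2 \<longrightarrow> case_prod \<psi> x = 0) \<and>
     (\<forall>x\<in>St2 - B2. case_prod \<psi> x = (\<Sum>j\<in>I2 x. c2 x j * case_prod \<psi> (f2 x j)) + 1/2))"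
proof -
  have e: "(1 + (\<Sum>l\<in>V. P i l * \<psi> l j + P j l * \<psi> i l)) / 2 =
     (\<Sum>k\<in>I2 (i, j). c2 (i, j) k * case_prod \<psi> (f2 (i, j) k)) + 1/2" for i j
    by (simp add: sum2 sum.distrib add_divide_distrib)
  show ?thesis
  proof
    assume H: "psi_prop \<psi>"
    have Ho: "\<And>i j. (i \<notin> V \<or> j \<notin> V) \<Longrightarrow> \<psi> i j = 0" and Hd: "\<And>i. i \<in> V \<Longrightarrow> \<psi> i i = 0"
      and He: "\<And>i j. i \<in> V \<Longrightarrow> j \<in> V \<Longrightarrow> i \<noteq> j \<Longrightarrow>
           \<psi> i j = (1 + (\<Sum>l\<in>V. P i l * \<psi> l j + P j l * \<psi> i l)) / 2"
      using H[unfolded psi_prop_def, THEN conjunct1, rule_format]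
        H[unfolded psi_prop_def, THEN conjunct2, THEN conjunct1, rule_format]
        H[unfolded psi_prop_def, THEN conjunct2, THEN conjunct2, rule_format] by auto
    show "(\<forall>x. x \<notin> St2 - B2 \<longrightarrow> case_prod \<psi> x = 0) \<and>
     (\<forall>x\<in>St2 - B2. case_prod \<psi> x = (\<Sum>j\<in>I2 x. c2 x j * case_prod \<psi> (f2 x j)) + 1/2)"
    proof (intro conjI allI impI ballI)
      fix x :: "'v \<times> 'v" assume x: "x \<notin> St2 - B2"
      obtain i j where ij: "x = (i, j)" by force
      show "case_prod \<psi> x = 0"
      proof (cases "i \<in> V \<and> j \<in> V")
        case True
        then have "i = j" using x ij by (auto simp: St2_def B2_def)
        then show ?thesis using Hd True ij by simp
      next
        case False then show ?thesis using Ho ij by simp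
      qed
    next
      fix x :: "'v \<times> 'v" assume x: "x \<in> St2 - B2"
      obtain i j where ij: "x = (i, j)" by force
      have "i \<in> V" "j \<in> V" "i \<noteq> j" using x ij by (auto simp: St2_def B2_def)
      then have "\<psi> i j = (1 + (\<Sum>l\<in>V. P i l * \<psi> l j + P j l * \<psi> i l)) / 2"
        by (rule He)
      then show "case_prod \<psi> x = (\<Sum>j\<in>I2 x. c2 x j * case_prod \<psi> (f2 x j)) + 1/2"
        using ij e[of i j] by simp
    qed
  next
    assume H: "(\<forall>x. x \<notin> St2 - B2 \<longrightarrow> case_prod \<psi> x = 0) \<and>
     (\<forall>x\<in>St2 - B2. case_prod \<psi> x = (\<Sum>j\<in>I2 x. c2 x j * case_prod \<psi> (f2 x j)) + 1/2)"
    have h1: "\<psi> i j = 0" if "(i, j) \<notin> St2 - B2" for i j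
      using H[THEN conjunct1, rule_format, of "(i, j)"] that by simp
    have h2: "\<psi> i j = (\<Sum>k\<in>I2 (i, j). c2 (i, j) k * case_prod \<psi> (f2 (i, j) k)) + 1/2"
      if "(i, j) \<in> St2 - B2" for i j using bspec[OF H[THEN conjunct2] that] by simp
    show "psi_prop \<psi>" unfolding psi_prop_def
    proof (intro conjI allI impI ballI)
      fix i j assume "i \<notin> V \<or> j \<notin> V"
      then show "\<psi> i j = 0" by (intro h1) (auto simp: St2_def)
    next
      fix i assume "i \<in> V"
      then show "\<psi> i i = 0" by (intro h1) (auto simp: B2_def)
    next
      fix i j assume "i \<in> V" "j \<in> V" "i \<noteq> j"
      then have ij: "(i, j) \<in> St2 - B2" by (auto simp: St2_def B2_def)
      show "\<psi> i j = (1 + (\<Sum>l\<in>V. P i l * \<psi> l j + P j l * \<psi> i l)) / 2"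
        using h2[OF ij] e[of i j] by linarith
    qed
  qed
qed

lemma psi_ok: "psi_prop (psi V E w)"
proof -
  obtain R where R: "(\<forall>x. x \<notin> St2 - B2 \<longrightarrow> R x = 0) \<and>
     (\<forall>x\<in>St2 - B2. R x = (\<Sum>j\<in>I2 x. c2 x j * R (f2 x j)) + 1/2)"
    using pair_exist[of "\<lambda>_. 1/2"] by auto
  have ex: "psi_prop (\<lambda>i j. R (i, j))" unfolding psi_prop_iff case_prod_eta using R by blast
  have un: "\<psi> = (\<lambda>i j. R (i, j))" if "psi_prop \<psi>" for \<psi>
  proof -
    let ?D = "\<lambda>x. case_prod \<psi> x - R x"
    have T: "(\<forall>x. x \<notin> St2 - B2 \<longrightarrow> case_prod \<psi> x = 0) \<and>
     (\<forall>x\<in>St2 - B2. case_prod \<psi> x = (\<Sum>j\<in>I2 x. c2 x j * case_prod \<psi> (f2 x j)) + 1/2)"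
      using that unfolding psi_prop_iff by blast
    have d1: "\<forall>x. x \<notin> St2 - B2 \<longrightarrow> ?D x = 0" using T[THEN conjunct1] R[THEN conjunct1] by simp
    have d2: "\<forall>x\<in>St2 - B2. ?D x = (\<Sum>j\<in>I2 x. c2 x j * ?D (f2 x j))"
    proof
      fix x assume x: "x \<in> St2 - B2"
      have "?D x = (\<Sum>j\<in>I2 x. c2 x j * case_prod \<psi> (f2 x j)) - (\<Sum>j\<in>I2 x. c2 x j * R (f2 x j))"
        using bspec[OF T[THEN conjunct2] x] bspec[OF R[THEN conjunct2] x] by linarith
      also have "\<dots> = (\<Sum>j\<in>I2 x. c2 x j * ?D (f2 x j))"
        by (simp add: right_diff_distrib sum_subtractf)
      finally show "?D x = (\<Sum>j\<in>I2 x. c2 x j * ?D (f2 x j))" .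
    qed
    have "?D (i, j) = 0" for i j by (rule pair_unique[OF d1 d2])
    then show ?thesis by (auto simp: fun_eq_iff)
  qed
  have "psi V E w = (THE \<psi>. psi_prop \<psi>)" unfolding psi_def psi_prop_def by (rule refl)
  also have "\<dots> = (\<lambda>i j. R (i, j))" by (rule the_equality[of psi_prop, OF ex un])
  finally show ?thesis using ex by (simp only:)
qed

end


context vgraph
begin

abbreviation "n \<equiv> real (card V)"

lemma n_pos: "0 < n" using finV Vne by (simp add: card_gt_0_iff)

definition Qop :: "'v set \<Rightarrow> real \<Rightarrow> 'v set \<Rightarrow> ('v set \<Rightarrow> real) \<Rightarrow> real" where
  "Qop S \<delta> X g = (\<Sum>u\<in>V. \<Sum>v\<in>in_nbrs V E u. (1 / n) * choice_prob V E w S \<delta> X u v * g (next_config X u v))"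

lemma fin_in: "finite (in_nbrs V E u)" unfolding in_nbrs_def using finV by simp

lemma fbias_nonneg: "0 \<le> \<delta> \<Longrightarrow> 0 \<le> fbias S \<delta> X v u" unfolding fbias_def by simp

lemma den_nonneg: "0 \<le> \<delta> \<Longrightarrow> 0 \<le> (\<Sum>x\<in>in_nbrs V E u. fbias S \<delta> X x u * w x u)"
  by (intro sum_nonneg mult_nonneg_nonneg fbias_nonneg) (auto simp: in_nbrs_def intro: less_imp_le wpos)

lemma cp_nonneg: "0 \<le> \<delta> \<Longrightarrow> v \<in> in_nbrs V E u \<Longrightarrow> 0 \<le> choice_prob V E w S \<delta> X u v"
  unfolding choice_prob_def
  by (intro divide_nonneg_nonneg mult_nonneg_nonneg fbias_nonneg den_nonneg) (auto simp: in_nbrs_def intro: less_imp_le wpos)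

lemma cp_sum_le: "0 \<le> \<delta> \<Longrightarrow> (\<Sum>v\<in>in_nbrs V E u. choice_prob V E w S \<delta> X u v) \<le> 1"
proof -
  assume d: "0 \<le> \<delta>"
  have "(\<Sum>v\<in>in_nbrs V E u. choice_prob V E w S \<delta> X u v)
      = (\<Sum>x\<in>in_nbrs V E u. fbias S \<delta> X x u * w x u) / (\<Sum>x\<in>in_nbrs V E u. fbias S \<delta> X x u * w x u)"
    unfolding choice_prob_def by (simp add: sum_divide_distrib[symmetric])
  also have "\<dots> \<le> 1" by (simp add: divide_le_eq_1)
  finally show ?thesis .
qed

lemma Qop_nonneg: "0 \<le> \<delta> \<Longrightarrow> (\<And>Y. 0 \<le> g Y) \<Longrightarrow> 0 \<le> Qop S \<delta> X g"
  unfolding Qop_def using n_pos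
  by (intro sum_nonneg mult_nonneg_nonneg cp_nonneg) auto

lemma Qop_mono: "0 \<le> \<delta> \<Longrightarrow> (\<And>Y. g Y \<le> h Y) \<Longrightarrow> Qop S \<delta> X g \<le> Qop S \<delta> X h"
  unfolding Qop_def using n_pos
  by (intro sum_mono mult_left_mono mult_nonneg_nonneg cp_nonneg) auto

lemma Qop_le1: "0 \<le> \<delta> \<Longrightarrow> (\<And>Y. g Y \<le> 1) \<Longrightarrow> (\<And>Y. 0 \<le> g Y) \<Longrightarrow> Qop S \<delta> X g \<le> 1"
proof -
  assume d: "0 \<le> \<delta>" and g1: "\<And>Y. g Y \<le> 1" and g0: "\<And>Y. 0 \<le> g Y"
  have "Qop S \<delta> X g \<le> Qop S \<delta> X (\<lambda>_. 1)" by (rule Qop_mono[OF d g1])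
  also have "\<dots> = (\<Sum>u\<in>V. (1 / n) * (\<Sum>v\<in>in_nbrs V E u. choice_prob V E w S \<delta> X u v))"
    unfolding Qop_def by (simp add: sum_distrib_left)
  also have "\<dots> \<le> (\<Sum>u\<in>V. (1 / n) * 1)"
    using n_pos by (intro sum_mono mult_left_mono cp_sum_le d) auto
  also have "\<dots> = 1" using n_pos by simp
  finally show ?thesis .
qed

lemma hit_Suc: "hit_prob V E w S \<delta> (Suc t) X = (if X = V then 1 else Qop S \<delta> X (hit_prob V E w S \<delta> t))"
  unfolding Qop_def by simp

lemma hit_bounds: "0 \<le> \<delta> \<Longrightarrow> 0 \<le> hit_prob V E w S \<delta> t X \<and> hit_prob V E w S \<delta> t X \<le> 1"
proof (induction t arbitrary: X)
  case 0 then show ?case by simp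
next
  case (Suc t)
  have g0: "\<And>Y. 0 \<le> hit_prob V E w S \<delta> t Y" and g1: "\<And>Y. hit_prob V E w S \<delta> t Y \<le> 1"
    using Suc.IH[OF Suc.prems] by auto
  show ?case by (cases "X = V") (simp_all del: hit_prob.simps(2) add: hit_Suc Qop_nonneg[OF Suc.prems g0] Qop_le1[OF Suc.prems g1 g0])
qed

lemma hit_mono: "0 \<le> \<delta> \<Longrightarrow> hit_prob V E w S \<delta> t X \<le> hit_prob V E w S \<delta> (Suc t) X"
proof (induction t arbitrary: X)
  case 0
  have "0 \<le> Qop S \<delta> X (hit_prob V E w S \<delta> 0)" by (rule Qop_nonneg[OF 0]) (use hit_bounds[OF 0] in auto)
  then show ?case by (simp del: hit_prob.simps(2) add: hit_Suc)
next
  case (Suc t)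
  show ?case
  proof (cases "X = V")
    case True then show ?thesis by (simp del: hit_prob.simps(2) add: hit_Suc)
  next
    case False
    have "Qop S \<delta> X (hit_prob V E w S \<delta> t) \<le> Qop S \<delta> X (hit_prob V E w S \<delta> (Suc t))"
      by (rule Qop_mono[OF Suc.prems Suc.IH[OF Suc.prems]])
    then show ?thesis using False by (simp only: hit_Suc if_False)
  qed
qed

lemma hit_empty: "hit_prob V E w S \<delta> t {} = 0"
proof (induction t)
  case 0 then show ?case using Vne by simp
next
  case (Suc t)
  have nc: "next_config {} u v = {}" for u v unfolding next_config_def by simp
  have "hit_prob V E w S \<delta> t (next_config {} u v) = 0" for u v unfolding nc by (rule Suc.IH)
  then show ?case using Vne by (simp del: hit_prob.simps(2) add: hit_Suc Qop_def)
qed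

lemma hit_V: "hit_prob V E w S \<delta> t V = 1" by (cases t) simp_all

lemma phi_lim: "0 \<le> \<delta> \<Longrightarrow> (\<lambda>t. hit_prob V E w S \<delta> t X) \<longlonglongrightarrow> fp_from V E w S \<delta> X"
proof -
  assume d: "0 \<le> \<delta>"
  have inc: "incseq (\<lambda>t. hit_prob V E w S \<delta> t X)" using hit_mono[OF d] by (simp add: incseq_SucI)
  have "bdd_above (range (\<lambda>t. hit_prob V E w S \<delta> t X))"
    using hit_bounds[OF d] by (intro bdd_aboveI2[where M=1]) auto
  then have "convergent (\<lambda>t. hit_prob V E w S \<delta> t X)"
    using LIMSEQ_incseq_SUP inc convergent_def by blast
  then show ?thesis unfolding fp_from_def by (simp add: convergent_LIMSEQ_iff)
qed

lemma phi_V: "0 \<le> \<delta> \<Longrightarrow> fp_from V E w S \<delta> V = 1"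
  using phi_lim[of \<delta> S V] hit_V LIMSEQ_unique by (simp add: LIMSEQ_const_iff)

lemma phi_empty: "0 \<le> \<delta> \<Longrightarrow> fp_from V E w S \<delta> {} = 0"
  using phi_lim[of \<delta> S "{}"] hit_empty by (simp add: LIMSEQ_const_iff)

lemma phi_eq: "0 \<le> \<delta> \<Longrightarrow> X \<noteq> V \<Longrightarrow> fp_from V E w S \<delta> X = Qop S \<delta> X (fp_from V E w S \<delta>)"
proof -
  assume d: "0 \<le> \<delta>" and X: "X \<noteq> V"
  have "(\<lambda>t. hit_prob V E w S \<delta> (Suc t) X) \<longlonglongrightarrow> fp_from V E w S \<delta> X"
    using phi_lim[OF d] LIMSEQ_Suc by blast
  moreover have "(\<lambda>t. hit_prob V E w S \<delta> (Suc t) X) = (\<lambda>t. Qop S \<delta> X (hit_prob V E w S \<delta> t))"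
    using X by (simp only: hit_Suc if_False)
  moreover have "(\<lambda>t. Qop S \<delta> X (hit_prob V E w S \<delta> t)) \<longlonglongrightarrow> Qop S \<delta> X (fp_from V E w S \<delta>)"
    unfolding Qop_def by (intro tendsto_intros phi_lim d)
  ultimately show ?thesis using LIMSEQ_unique by metis
qed

end


locale nontriv = vgraph V E w for V :: "'v set" and E :: "('v \<times> 'v) set" and w :: "'v \<Rightarrow> 'v \<Rightarrow> real" +
  assumes two: "\<exists>a\<in>V. \<exists>b\<in>V. a \<noteq> b"
begin

lemma has_in: "u \<in> V \<Longrightarrow> \<exists>v. (v, u) \<in> E"
proof -
  assume u: "u \<in> V"
  obtain x where x: "x \<in> V" "x \<noteq> u" using two by metis
  have "(x, u) \<in> E\<^sup>*" using sc x u unfolding strongly_connected_def by auto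
  then show ?thesis using x(2) by (cases rule: rtranclE) auto
qed

lemma deg_pos: "u \<in> V \<Longrightarrow> 0 < deg u"
  using has_in Esym deg_pos_E by blast

lemma P_rowsum: "u \<in> V \<Longrightarrow> (\<Sum>l\<in>V. P u l) = 1"
  using deg_pos[of u] unfolding P_def' by (simp add: sum_divide_distrib[symmetric] deg_def[symmetric])

lemma W0_P: "u \<in> V \<Longrightarrow> W0 u l = deg u * P u l"
  using deg_pos[of u] unfolding P_def' by simp

definition Wt :: real where "Wt = (\<Sum>j\<in>V. deg j)"
definition mu :: "'v \<Rightarrow> real" where "mu i = deg i / Wt"

lemma Wt_pos: "0 < Wt"
proof -
  obtain a where "a \<in> V" using Vne by auto
  then have "deg a \<le> Wt" unfolding Wt_def using finV deg_nonneg by (intro member_le_sum) auto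
  then show ?thesis using deg_pos[OF \<open>a \<in> V\<close>] by linarith
qed

lemma mu_pos: "i \<in> V \<Longrightarrow> 0 < mu i" unfolding mu_def using deg_pos Wt_pos by simp
lemma mu_nonneg: "0 \<le> mu i" unfolding mu_def using deg_nonneg Wt_pos by simp
lemma mu_sum: "(\<Sum>i\<in>V. mu i) = 1" unfolding mu_def using Wt_pos by (simp add: sum_divide_distrib[symmetric] Wt_def[symmetric])

lemma muP: "i \<in> V \<Longrightarrow> mu i * P i j = W0 i j / Wt"
  unfolding mu_def P_def' using deg_pos[of i] by simp

lemma mu_rev: "i \<in> V \<Longrightarrow> j \<in> V \<Longrightarrow> mu i * P i j = mu j * P j i"
  using muP w0_sym by simp

lemma mu_stat: "l \<in> V \<Longrightarrow> (\<Sum>u\<in>V. mu u * P u l) = mu l"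
proof -
  assume l: "l \<in> V"
  have "(\<Sum>u\<in>V. mu u * P u l) = (\<Sum>u\<in>V. W0 l u / Wt)"
    by (intro sum.cong refl) (simp add: muP w0_sym)
  also have "\<dots> = mu l" unfolding mu_def deg_def by (simp add: sum_divide_distrib)
  finally show ?thesis .
qed

lemma mu_le1: "mu i \<le> 1"
proof (cases "i \<in> V")
  case True
  have "mu i \<le> (\<Sum>i\<in>V. mu i)" using True finV mu_nonneg by (intro member_le_sum) auto
  then show ?thesis using mu_sum by simp
next
  case False
  then have "deg i = 0" unfolding deg_def w0_def using EV by (intro sum.neutral) auto
  then show ?thesis unfolding mu_def by simp
qed

lemma in_sum: "(\<Sum>v\<in>in_nbrs V E u. g v * w v u) = (\<Sum>l\<in>V. g l * W0 u l)"
proof -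
  have "(\<Sum>l\<in>V. g l * W0 u l) = (\<Sum>l\<in>V. if (l, u) \<in> E then g l * w l u else 0)"
    by (intro sum.cong refl) (auto simp: w0_def Esym[of u] wsym)
  also have "\<dots> = (\<Sum>l\<in>{l \<in> V. (l, u) \<in> E}. g l * w l u)"
    using finV by (simp add: sum.inter_filter)
  finally show ?thesis unfolding in_nbrs_def by simp
qed

definition alpha :: "'v set \<Rightarrow> 'v \<Rightarrow> real" where "alpha X u = (\<Sum>l\<in>X. P u l)"

lemma alpha_nonneg: "0 \<le> alpha X u" unfolding alpha_def by (intro sum_nonneg P_nonneg)

lemma alpha_le1: "X \<subseteq> V \<Longrightarrow> alpha X u \<le> 1"
proof -
  assume X: "X \<subseteq> V"
  have "alpha X u \<le> (\<Sum>l\<in>V. P u l)" unfolding alpha_def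
    using X finV P_nonneg by (intro sum_mono2) auto
  then show ?thesis using P_rowsum_le[of u] by linarith
qed

lemma alpha_compl: "X \<subseteq> V \<Longrightarrow> u \<in> V \<Longrightarrow> (\<Sum>l\<in>V - X. P u l) = 1 - alpha X u"
  unfolding alpha_def using P_rowsum[of u] finV by (simp add: sum_diff finite_subset)

lemma split_sum: "X \<subseteq> V \<Longrightarrow> u \<in> V \<Longrightarrow>
   (\<Sum>l\<in>V. (if l \<in> X then a else b) * W0 u l) = deg u * (a * alpha X u + b * (1 - alpha X u))"
proof -
  assume X: "X \<subseteq> V" and u: "u \<in> V"
  have "(\<Sum>l\<in>V. (if l \<in> X then a else b) * W0 u l) = (\<Sum>l\<in>V. if l \<in> X then a * W0 u l else b * W0 u l)"
    by (intro sum.cong refl) auto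
  also have "\<dots> = (\<Sum>l\<in>V \<inter> {l. l \<in> X}. a * W0 u l) + (\<Sum>l\<in>V \<inter> - {l. l \<in> X}. b * W0 u l)"
    using finV by (rule sum.If_cases)
  also have "V \<inter> {l. l \<in> X} = X" using X by auto
  also have "V \<inter> - {l. l \<in> X} = V - X" by auto
  also have "(\<Sum>l\<in>X. a * W0 u l) = a * deg u * alpha X u"
    unfolding alpha_def using W0_P[OF u] by (simp add: sum_distrib_left mult.assoc)
  also have "(\<Sum>l\<in>V - X. b * W0 u l) = b * deg u * (1 - alpha X u)"
    using alpha_compl[OF X u] W0_P[OF u] by (simp add: sum_distrib_left[symmetric] mult.assoc)
  finally show ?thesis by (simp add: algebra_simps)
qed

definition fb1 :: "'v set \<Rightarrow> real \<Rightarrow> 'v \<Rightarrow> real" where "fb1 S \<delta> u = (if u \<in> S then 1 + \<delta> else 1)"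

definition Ad :: "'v set \<Rightarrow> real \<Rightarrow> 'v set \<Rightarrow> 'v \<Rightarrow> real" where
  "Ad S \<delta> X u = fb1 S \<delta> u * alpha X u / (fb1 S \<delta> u * alpha X u + (1 - alpha X u))"

lemma fb1_ge1: "0 \<le> \<delta> \<Longrightarrow> 1 \<le> fb1 S \<delta> u" unfolding fb1_def by simp

lemma Aden_ge1: "0 \<le> \<delta> \<Longrightarrow> X \<subseteq> V \<Longrightarrow> 1 \<le> fb1 S \<delta> u * alpha X u + (1 - alpha X u)"
proof -
  assume "0 \<le> \<delta>" "X \<subseteq> V"
  then have "alpha X u * 1 \<le> alpha X u * fb1 S \<delta> u"
    by (intro mult_left_mono fb1_ge1 alpha_nonneg)
  then show ?thesis by (simp add: mult.commute)
qed

lemma step_alg: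
  fixes d f a g1 g0 :: real
  assumes "0 < d" "1 \<le> f * a + (1 - a)"
  shows "d * (f * g1 * a + g0 * (1 - a)) / (d * (f * a + (1 - a)))
     = f * a / (f * a + (1 - a)) * g1 + (1 - f * a / (f * a + (1 - a))) * g0"
proof -
  define D where "D = f * a + (1 - a)"
  have D0: "D \<noteq> 0" using assms unfolding D_def by linarith
  have "1 - f * a / D = (1 - a) / D" using D0 unfolding D_def by (simp add: field_simps)
  moreover have "f * a / D * g1 + (1 - a) / D * g0 = (f * g1 * a + g0 * (1 - a)) / D"
    using D0 by (simp add: field_simps)
  moreover have "d * (f * g1 * a + g0 * (1 - a)) / (d * D) = (f * g1 * a + g0 * (1 - a)) / D"
    using assms(1) by simp
  ultimately show ?thesis unfolding D_def[symmetric] by simp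
qed

lemma step:
  assumes X: "X \<subseteq> V" and u: "u \<in> V" and d: "0 \<le> \<delta>"
  shows "(\<Sum>v\<in>in_nbrs V E u. choice_prob V E w S \<delta> X u v * g (next_config X u v))
     = Ad S \<delta> X u * g (insert u X) + (1 - Ad S \<delta> X u) * g (X - {u})"
proof -
  let ?f = "fb1 S \<delta> u" and ?a = "alpha X u" and ?g1 = "g (insert u X)" and ?g0 = "g (X - {u})"
  have fb: "fbias S \<delta> X v u = (if v \<in> X then ?f else 1)" for v
    unfolding fbias_def fb1_def by auto
  define Den where "Den = (\<Sum>x\<in>in_nbrs V E u. fbias S \<delta> X x u * w x u)"
  have "Den = (\<Sum>l\<in>V. (if l \<in> X then ?f else 1) * W0 u l)"
    unfolding Den_def fb by (rule in_sum)
  also have "\<dots> = deg u * (?f * ?a + 1 * (1 - ?a))" by (rule split_sum[OF X u])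
  finally have Den: "Den = deg u * (?f * ?a + (1 - ?a))" by simp
  have "(\<Sum>v\<in>in_nbrs V E u. choice_prob V E w S \<delta> X u v * g (next_config X u v))
      = (\<Sum>v\<in>in_nbrs V E u. (if v \<in> X then ?f * ?g1 else ?g0) * w v u) / Den"
    unfolding sum_divide_distrib choice_prob_def Den_def[symmetric]
    by (intro sum.cong refl) (auto simp: fb next_config_def)
  also have "(\<Sum>v\<in>in_nbrs V E u. (if v \<in> X then ?f * ?g1 else ?g0) * w v u)
      = (\<Sum>l\<in>V. (if l \<in> X then ?f * ?g1 else ?g0) * W0 u l)" by (rule in_sum)
  also have "\<dots> = deg u * (?f * ?g1 * ?a + ?g0 * (1 - ?a))" by (rule split_sum[OF X u])
  finally have L: "(\<Sum>v\<in>in_nbrs V E u. choice_prob V E w S \<delta> X u v * g (next_config X u v))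
      = deg u * (?f * ?g1 * ?a + ?g0 * (1 - ?a)) / (deg u * (?f * ?a + (1 - ?a)))"
    using Den by simp
  have dp: "0 < deg u" by (rule deg_pos[OF u])
  have D1: "1 \<le> ?f * ?a + (1 - ?a)" by (rule Aden_ge1[OF d X])
  show ?thesis unfolding L Ad_def using dp D1
    by (intro step_alg) auto
qed

lemma Qop_eq:
  assumes X: "X \<subseteq> V" and d: "0 \<le> \<delta>"
  shows "Qop S \<delta> X g = (1 / n) * (\<Sum>u\<in>V. Ad S \<delta> X u * g (insert u X) + (1 - Ad S \<delta> X u) * g (X - {u}))"
proof -
  have "Qop S \<delta> X g = (\<Sum>u\<in>V. (1 / n) * (\<Sum>v\<in>in_nbrs V E u. choice_prob V E w S \<delta> X u v * g (next_config X u v)))"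
    unfolding Qop_def by (simp add: sum_distrib_left mult.assoc)
  also have "\<dots> = (\<Sum>u\<in>V. (1 / n) * (Ad S \<delta> X u * g (insert u X) + (1 - Ad S \<delta> X u) * g (X - {u})))"
    by (intro sum.cong refl) (simp add: step[OF X _ d])
  finally show ?thesis by (simp add: sum_distrib_left)
qed

end


context nontriv
begin

definition eta1 :: real where
  "eta1 = Min (insert 1 ((\<lambda>e. w (fst e) (snd e) / (2 * n * deg (snd e))) ` E))"

lemma eta1_pos: "0 < eta1" and eta1_le1: "eta1 \<le> 1"
  and eta1_le: "(v, u) \<in> E \<Longrightarrow> eta1 \<le> w v u / (2 * n * deg u)"
proof -
  have pos: "0 < w (fst e) (snd e) / (2 * n * deg (snd e))" if "e \<in> E" for e
  proof -
    have "snd e \<in> V" using that EV by auto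
    then show ?thesis using wpos[of "fst e" "snd e"] that n_pos deg_pos by simp
  qed
  show "0 < eta1" unfolding eta1_def using finE pos by (subst Min_gr_iff) auto
  show "eta1 \<le> 1" unfolding eta1_def using finE by simp
  show "(v, u) \<in> E \<Longrightarrow> eta1 \<le> w v u / (2 * n * deg u)" unfolding eta1_def using finE
    by (intro Min_le) force+
qed

lemma cp_lower:
  assumes d: "0 \<le> \<delta>" "\<delta> \<le> 1" and e: "(v, u) \<in> E" and vX: "v \<in> X"
  shows "w v u / (2 * deg u) \<le> choice_prob V E w S \<delta> X u v"
proof -
  define Den where "Den = (\<Sum>x\<in>in_nbrs V E u. fbias S \<delta> X x u * w x u)"
  have vin: "v \<in> in_nbrs V E u" using e EV unfolding in_nbrs_def by auto
  have uV: "u \<in> V" using e EV by auto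
  have wv: "0 < w v u" using wpos[OF e] .
  have fbv: "1 \<le> fbias S \<delta> X v u" unfolding fbias_def using d by simp
  have "Den \<le> (\<Sum>x\<in>in_nbrs V E u. 2 * w x u)" unfolding Den_def
    using d by (intro sum_mono mult_right_mono) (auto simp: fbias_def in_nbrs_def intro: less_imp_le wpos)
  also have "\<dots> = 2 * (\<Sum>x\<in>in_nbrs V E u. (\<lambda>_. 1) x * w x u)" by (simp add: sum_distrib_left)
  also have "(\<Sum>x\<in>in_nbrs V E u. (\<lambda>_. 1) x * w x u) = (\<Sum>l\<in>V. (\<lambda>_. 1) l * W0 u l)" by (rule in_sum)
  also have "\<dots> = deg u" unfolding deg_def by simp
  finally have Dle: "Den \<le> 2 * deg u" .
  have "fbias S \<delta> X v u * w v u \<le> Den" unfolding Den_def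
    using fin_in vin d by (intro member_le_sum mult_nonneg_nonneg fbias_nonneg) (auto simp: in_nbrs_def intro: less_imp_le wpos)
  moreover have "w v u \<le> fbias S \<delta> X v u * w v u" using fbv wv by simp
  ultimately have Dpos: "0 < Den" using wv by linarith
  have "w v u / (2 * deg u) \<le> w v u / Den"
    using Dle Dpos wv by (intro divide_left_mono) auto
  also have "\<dots> \<le> fbias S \<delta> X v u * w v u / Den"
    using fbv wv Dpos by (intro divide_right_mono) auto
  finally show ?thesis unfolding choice_prob_def Den_def .
qed

definition BC :: "'v set set" where "BC = {{}, V}"
definition IC :: "'v set \<Rightarrow> ('v \<times> 'v) set" where "IC X = Sigma V (in_nbrs V E)"
definition cC :: "'v set \<Rightarrow> real \<Rightarrow> 'v set \<Rightarrow> 'v \<times> 'v \<Rightarrow> real" where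
  "cC S \<delta> X k = (1 / n) * choice_prob V E w S \<delta> X (fst k) (snd k)"
definition fC :: "'v set \<Rightarrow> 'v \<times> 'v \<Rightarrow> 'v set" where "fC X k = next_config X (fst k) (snd k)"

lemma sumC: "(\<Sum>k\<in>IC X. cC S \<delta> X k * g (fC X k)) = Qop S \<delta> X g"
proof -
  have "Qop S \<delta> X g = (\<Sum>(u, v)\<in>Sigma V (in_nbrs V E). (1 / n) * choice_prob V E w S \<delta> X u v * g (next_config X u v))"
    unfolding Qop_def using finV fin_in by (intro sum.Sigma) auto
  also have "\<dots> = (\<Sum>k\<in>IC X. cC S \<delta> X k * g (fC X k))"
    unfolding IC_def cC_def fC_def by (intro sum.cong refl) auto
  finally show ?thesis by simp
qed

lemma kernC: "0 \<le> \<delta> \<Longrightarrow> X \<in> Pow V - BC \<Longrightarrow>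
   finite (IC X) \<and> (\<forall>k\<in>IC X. 0 \<le> cC S \<delta> X k \<and> fC X k \<in> Pow V) \<and> sum (cC S \<delta> X) (IC X) \<le> 1"
proof -
  assume d: "0 \<le> \<delta>" and X: "X \<in> Pow V - BC"
  have fin: "finite (IC X)" unfolding IC_def using finV fin_in by auto
  have nn: "\<forall>k\<in>IC X. 0 \<le> cC S \<delta> X k \<and> fC X k \<in> Pow V"
    using X n_pos cp_nonneg[OF d] unfolding IC_def cC_def fC_def next_config_def by auto
  have "sum (cC S \<delta> X) (IC X) = (\<Sum>k\<in>IC X. cC S \<delta> X k * (\<lambda>_. 1) (fC X k))" by simp
  also have "\<dots> = Qop S \<delta> X (\<lambda>_. 1)" by (rule sumC)
  also have "\<dots> \<le> 1" by (rule Qop_le1[OF d]) auto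
  finally show ?thesis using fin nn by blast
qed

lemma cross: "(x, y) \<in> E\<^sup>* \<Longrightarrow> x \<in> X \<Longrightarrow> y \<notin> X \<Longrightarrow> \<exists>v u. (v, u) \<in> E \<and> v \<in> X \<and> u \<notin> X"
proof (induction rule: rtrancl_induct)
  case base then show ?case by simp
next
  case (step y z)
  then show ?case by (cases "y \<in> X") auto
qed

lemma reachC:
  assumes d: "0 \<le> \<delta>" "\<delta> \<le> 1" and X: "X \<subseteq> V"
  shows "reach BC IC (cC S \<delta>) fC eta1 (card V) X"
proof -
  have main: "\<forall>X. X \<subseteq> V \<longrightarrow> card (V - X) = m \<longrightarrow> reach BC IC (cC S \<delta>) fC eta1 m X" for m
  proof (induction m)
    case 0
    show ?case
    proof (intro allI impI)
      fix X assume "X \<subseteq> V" "card (V - X) = 0"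
      then have "X = V" using finV by (metis Diff_eq_empty_iff card_0_eq finite_Diff subset_antisym)
      then show "reach BC IC (cC S \<delta>) fC eta1 0 X" by (simp add: BC_def)
    qed
  next
    case (Suc m)
    show ?case
    proof (intro allI impI)
      fix X assume X: "X \<subseteq> V" and cX: "card (V - X) = Suc m"
      show "reach BC IC (cC S \<delta>) fC eta1 (Suc m) X"
      proof (cases "X = {}")
        case True then show ?thesis by (intro reach_B) (simp add: BC_def)
      next
        case False
        then obtain x where x: "x \<in> X" by auto
        obtain y where y: "y \<in> V - X" using cX by (metis card.empty ex_in_conv nat.simps(3))
        have "(x, y) \<in> E\<^sup>*" using sc x y X unfolding strongly_connected_def by auto
        then obtain v u where vu: "(v, u) \<in> E" "v \<in> X" "u \<notin> X" using cross x y by blast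
        have uV: "u \<in> V" using vu EV by auto
        have card': "card (V - insert u X) = m"
        proof -
          have "V - insert u X = (V - X) - {u}" by auto
          then show ?thesis using cX uV vu(3) finV by simp
        qed
        have r: "reach BC IC (cC S \<delta>) fC eta1 m (insert u X)"
          using Suc.IH X uV card' by auto
        have k: "(u, v) \<in> IC X" unfolding IC_def in_nbrs_def using vu X uV by auto
        have "eta1 \<le> cC S \<delta> X (u, v)"
        proof -
          have "eta1 \<le> w v u / (2 * n * deg u)" by (rule eta1_le[OF vu(1)])
          also have "\<dots> = (1 / n) * (w v u / (2 * deg u))" by simp
          also have "\<dots> \<le> (1 / n) * choice_prob V E w S \<delta> X u v"
            using n_pos by (intro mult_left_mono cp_lower[OF d vu(1) vu(2)]) auto
          finally show ?thesis unfolding cC_def by simp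
        qed
        moreover have "fC X (u, v) = insert u X" unfolding fC_def next_config_def using vu by simp
        ultimately show ?thesis using k r by auto
      qed
    qed
  qed
  have "reach BC IC (cC S \<delta>) fC eta1 (card (V - X)) X" using main X by blast
  moreover have "card (V - X) \<le> card V" using finV by (simp add: card_mono)
  ultimately show ?thesis by (rule reach_mono)
qed

lemma maxpC:
  fixes r s :: "'v set \<Rightarrow> real"
  assumes d: "0 \<le> \<delta>" "\<delta> \<le> 1" and sig: "0 \<le> \<sigma>"
    and r0: "r {} = 0" and rV: "r V = 0"
    and eq: "\<And>X. X \<subseteq> V \<Longrightarrow> X \<noteq> {} \<Longrightarrow> X \<noteq> V \<Longrightarrow> r X = Qop S \<delta> X r + s X"
    and sb: "\<And>X. X \<subseteq> V \<Longrightarrow> X \<noteq> {} \<Longrightarrow> X \<noteq> V \<Longrightarrow> \<bar>s X\<bar> \<le> \<sigma>"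
    and X: "X \<subseteq> V"
  shows "\<bar>r X\<bar> \<le> n * \<sigma> / eta1 ^ card V"
proof -
  have "\<bar>r X\<bar> \<le> real (card V) * \<sigma> / eta1 ^ card V"
  proof (rule maxp_abs[where St = "Pow V" and B = BC and I = IC and c = "cC S \<delta>" and f = fC and s = s])
    show "finite (Pow V)" using finV by simp
    show "\<And>x. x \<in> Pow V - BC \<Longrightarrow> finite (IC x) \<and> (\<forall>j\<in>IC x. 0 \<le> cC S \<delta> x j \<and> fC x j \<in> Pow V) \<and> sum (cC S \<delta> x) (IC x) \<le> 1"
      by (rule kernC[OF d(1)])
    show "\<And>x. x \<in> BC \<Longrightarrow> r x = 0" using r0 rV by (auto simp: BC_def)
    show "\<And>x. x \<in> Pow V - BC \<Longrightarrow> r x = (\<Sum>j\<in>IC x. cC S \<delta> x j * r (fC x j)) + s x"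
      using eq by (auto simp: BC_def sumC)
    show "\<And>x. x \<in> Pow V - BC \<Longrightarrow> \<bar>s x\<bar> \<le> \<sigma>" using sb by (auto simp: BC_def)
    show "\<And>x. x \<in> Pow V \<Longrightarrow> reach BC IC (cC S \<delta>) fC eta1 (card V) x" using reachC[OF d] by auto
  qed (use eta1_pos eta1_le1 sig X in auto)
  then show ?thesis by simp
qed

end


lemma div_ge1_le: "0 \<le> (x::real) \<Longrightarrow> 1 \<le> y \<Longrightarrow> x / y \<le> x"
  by (simp add: divide_le_eq mult_le_cancel_left1)

lemma ind_sum: "X \<subseteq> A \<Longrightarrow> finite A \<Longrightarrow> (\<Sum>m\<in>A. if m \<in> X then g m else 0) = (\<Sum>m\<in>X. g m)"
proof -
  assume "X \<subseteq> A" "finite A"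
  then have "(\<Sum>m\<in>A. if m \<in> X then g m else 0) = (\<Sum>m\<in>{m \<in> A. m \<in> X}. g m)"
    by (simp add: sum.inter_filter)
  also have "{m \<in> A. m \<in> X} = X" using \<open>X \<subseteq> A\<close> by auto
  finally show ?thesis .
qed

lemma scalar_bounds:
  fixes a d :: real
  assumes a: "0 \<le> a" "a \<le> 1" and d: "0 \<le> d"
  shows "\<bar>(1 + d) * a / ((1 + d) * a + (1 - a)) - a - d * (a * (1 - a))\<bar> \<le> d\<^sup>2"
    and "\<bar>(1 + d) * a / ((1 + d) * a + (1 - a)) - a\<bar> \<le> d"
proof -
  have den: "(1 + d) * a + (1 - a) = 1 + d * a" by (simp add: algebra_simps)
  have dp: "1 \<le> 1 + d * a" using a d by simp
  have e1: "(1 + d) * a / (1 + d * a) - a = d * (a * (1 - a)) / (1 + d * a)"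
    using dp by (simp add: field_simps)
  have e2: "d * (a * (1 - a)) / (1 + d * a) - d * (a * (1 - a)) = - (d\<^sup>2 * (a * (a * (1 - a))) / (1 + d * a))"
    using dp by (simp add: field_simps power2_eq_square)
  have t0: "0 \<le> a * (1 - a)" using a by simp
  have t1: "a * (1 - a) \<le> 1" using a by (intro mult_le_one) auto
  have t2: "a * (a * (1 - a)) \<le> 1" using a t0 t1 by (intro mult_le_one) auto
  have t3: "0 \<le> a * (a * (1 - a))" using a t0 by simp
  have "\<bar>- (d\<^sup>2 * (a * (a * (1 - a))) / (1 + d * a))\<bar> = d\<^sup>2 * (a * (a * (1 - a))) / (1 + d * a)"
    using t3 dp by simp
  also have "\<dots> \<le> d\<^sup>2 * (a * (a * (1 - a)))" using t3 dp by (intro div_ge1_le) auto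
  also have "\<dots> \<le> d\<^sup>2 * 1" using t2 by (intro mult_left_mono) auto
  finally show "\<bar>(1 + d) * a / ((1 + d) * a + (1 - a)) - a - d * (a * (1 - a))\<bar> \<le> d\<^sup>2"
    unfolding den using e1 e2 by simp
  have "\<bar>d * (a * (1 - a)) / (1 + d * a)\<bar> = d * (a * (1 - a)) / (1 + d * a)" using d t0 dp by simp
  also have "\<dots> \<le> d * (a * (1 - a))" using d t0 dp by (intro div_ge1_le) auto
  also have "\<dots> \<le> d * 1" using t1 d by (intro mult_left_mono) auto
  finally show "\<bar>(1 + d) * a / ((1 + d) * a + (1 - a)) - a\<bar> \<le> d"
    unfolding den using e1 by simp
qed

context nontriv
begin

lemma Qop_add: "Qop S \<delta> X (\<lambda>Y. g Y + h Y) = Qop S \<delta> X g + Qop S \<delta> X h"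
  unfolding Qop_def by (simp add: distrib_left sum.distrib)

lemma Qop_scale: "Qop S \<delta> X (\<lambda>Y. k * g Y) = k * Qop S \<delta> X g"
  unfolding Qop_def by (simp add: sum_distrib_left mult_ac)

lemma Qop_sum: "Qop S \<delta> X (\<lambda>Y. \<Sum>i\<in>A. h i Y) = (\<Sum>i\<in>A. Qop S \<delta> X (h i))"
proof -
  have "Qop S \<delta> X (\<lambda>Y. \<Sum>i\<in>A. h i Y) = (\<Sum>u\<in>V. \<Sum>v\<in>in_nbrs V E u. \<Sum>i\<in>A.
      (1 / n) * choice_prob V E w S \<delta> X u v * h i (next_config X u v))"
    unfolding Qop_def by (simp add: sum_distrib_left)
  also have "\<dots> = (\<Sum>u\<in>V. \<Sum>i\<in>A. \<Sum>v\<in>in_nbrs V E u.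
      (1 / n) * choice_prob V E w S \<delta> X u v * h i (next_config X u v))"
    by (intro sum.cong refl sum.swap)
  also have "\<dots> = (\<Sum>i\<in>A. Qop S \<delta> X (h i))"
    unfolding Qop_def by (rule sum.swap)
  finally show ?thesis .
qed

lemma Ad0: "Ad S 0 X u = alpha X u"
  unfolding Ad_def fb1_def by simp

lemma Ad_notS: "u \<notin> S \<Longrightarrow> Ad S \<delta> X u = alpha X u"
  unfolding Ad_def fb1_def by simp

lemma Ad_S: "u \<in> S \<Longrightarrow> Ad S \<delta> X u = (1 + \<delta>) * alpha X u / ((1 + \<delta>) * alpha X u + (1 - alpha X u))"
  unfolding Ad_def fb1_def by simp

definition Lf :: "'v set \<Rightarrow> real" where "Lf X = (\<Sum>i\<in>X. mu i)"

lemma Lf_alpha: "X \<subseteq> V \<Longrightarrow> (\<Sum>u\<in>V. mu u * alpha X u) = Lf X"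
proof -
  assume X: "X \<subseteq> V"
  have "(\<Sum>u\<in>V. mu u * alpha X u) = (\<Sum>u\<in>V. \<Sum>l\<in>X. mu u * P u l)"
    unfolding alpha_def by (simp add: sum_distrib_left)
  also have "\<dots> = (\<Sum>l\<in>X. \<Sum>u\<in>V. mu u * P u l)" by (rule sum.swap)
  also have "\<dots> = (\<Sum>l\<in>X. mu l)" using X by (intro sum.cong refl mu_stat) auto
  finally show ?thesis unfolding Lf_def .
qed

lemma Lf_ind: "X \<subseteq> V \<Longrightarrow> (\<Sum>u\<in>V. mu u * (if u \<in> X then 1 else 0)) = Lf X"
proof -
  assume X: "X \<subseteq> V"
  have "(\<Sum>u\<in>V. mu u * (if u \<in> X then 1 else 0)) = (\<Sum>u\<in>V. if u \<in> X then mu u else 0)"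
    by (intro sum.cong refl) auto
  also have "\<dots> = Lf X" unfolding Lf_def by (rule ind_sum[OF X finV])
  finally show ?thesis .
qed

lemma Qop_diff: "Qop S \<delta> X (\<lambda>Y. g Y - h Y) = Qop S \<delta> X g - Qop S \<delta> X h"
  unfolding Qop_def by (simp add: right_diff_distrib sum_subtractf)

lemma Lf_V: "Lf V = 1" unfolding Lf_def by (rule mu_sum)
lemma Lf_empty: "Lf {} = 0" unfolding Lf_def by simp

lemma QL:
  assumes X: "X \<subseteq> V" and d: "0 \<le> \<delta>"
  shows "Qop S \<delta> X Lf = Lf X + (1 / n) * (\<Sum>u\<in>V. mu u * (Ad S \<delta> X u - alpha X u))"
proof -
  have finX: "finite X" using X finV finite_subset by blast
  have pu: "Ad S \<delta> X u * Lf (insert u X) + (1 - Ad S \<delta> X u) * Lf (X - {u})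
      = Lf X + mu u * (Ad S \<delta> X u - (if u \<in> X then 1 else 0))" for u
  proof (cases "u \<in> X")
    case True
    have h1: "insert u X = X" using True by auto
    have h2: "Lf (X - {u}) = Lf X - mu u"
      unfolding Lf_def using finX True by (simp add: sum_diff1)
    show ?thesis unfolding h1 h2 using True by (simp add: algebra_simps)
  next
    case False
    have h1: "Lf (insert u X) = mu u + Lf X" unfolding Lf_def using finX False by simp
    have h2: "X - {u} = X" using False by auto
    show ?thesis unfolding h1 h2 using False by (simp add: algebra_simps)
  qed
  have "Qop S \<delta> X Lf = (1 / n) * (\<Sum>u\<in>V. Lf X + mu u * (Ad S \<delta> X u - (if u \<in> X then 1 else 0)))"
    unfolding Qop_eq[OF X d] pu ..
  also have "(\<Sum>u\<in>V. Lf X + mu u * (Ad S \<delta> X u - (if u \<in> X then 1 else 0)))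
      = n * Lf X + ((\<Sum>u\<in>V. mu u * Ad S \<delta> X u) - (\<Sum>u\<in>V. mu u * (if u \<in> X then 1 else 0)))"
    by (simp add: sum.distrib right_diff_distrib sum_subtractf)
  also have "(\<Sum>u\<in>V. mu u * (if u \<in> X then 1 else 0)) = (\<Sum>u\<in>V. mu u * alpha X u)"
    using Lf_ind[OF X] Lf_alpha[OF X] by simp
  also have "(\<Sum>u\<in>V. mu u * Ad S \<delta> X u) - (\<Sum>u\<in>V. mu u * alpha X u)
      = (\<Sum>u\<in>V. mu u * (Ad S \<delta> X u - alpha X u))"
    by (simp add: right_diff_distrib sum_subtractf)
  finally show ?thesis using n_pos by (simp add: algebra_simps)
qed

lemma phi0_eq:
  assumes X: "X \<subseteq> V"
  shows "fp_from V E w S 0 X = Lf X"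
proof -
  let ?r = "\<lambda>Y. fp_from V E w S 0 Y - Lf Y"
  have "\<bar>?r X\<bar> \<le> n * 0 / eta1 ^ card V"
  proof (rule maxpC[where s = "\<lambda>_. 0"])
    show "?r {} = 0" using phi_empty[of 0 S] Lf_empty by simp
    show "?r V = 0" using phi_V[of 0 S] Lf_V by simp
    fix Y assume Y: "Y \<subseteq> V" "Y \<noteq> {}" "Y \<noteq> V"
    have "Qop S 0 Y ?r = Qop S 0 Y (fp_from V E w S 0) - Qop S 0 Y Lf" by (rule Qop_diff)
    also have "Qop S 0 Y (fp_from V E w S 0) = fp_from V E w S 0 Y" using phi_eq[of 0 Y S] Y by simp
    also have "Qop S 0 Y Lf = Lf Y" using QL[OF Y(1), of 0 S] by (simp add: Ad0)
    finally show "?r Y = Qop S 0 Y ?r + 0" by simp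
  qed (use X in auto)
  then show ?thesis by simp
qed

definition Cc :: "'v set \<Rightarrow> 'v \<Rightarrow> 'v \<Rightarrow> real" where
  "Cc S x y = (\<Sum>u\<in>S. mu u * P u x * P u y)"

definition srcJ :: "'v set \<Rightarrow> 'v \<times> 'v \<Rightarrow> real" where
  "srcJ S p = Cc S (fst p) (snd p) / (mu (fst p) * mu (snd p)) / 2"

lemma srcJ_nonneg: "0 \<le> srcJ S p"
  unfolding srcJ_def Cc_def using mu_nonneg P_nonneg
  by (intro divide_nonneg_nonneg sum_nonneg mult_nonneg_nonneg) auto

lemma J_exists: "\<exists>J. (\<forall>x. x \<notin> St2 - B2 \<longrightarrow> J x = 0) \<and>
     (\<forall>x\<in>St2 - B2. J x = (\<Sum>j\<in>I2 x. c2 x j * J (f2 x j)) + srcJ S x)"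
  by (rule pair_exist) (rule srcJ_nonneg)

end


lemma sum_two:
  fixes F :: "'a \<Rightarrow> real"
  assumes fin: "finite A" and a: "a \<in> A" and b: "b \<in> A" and ab: "a \<noteq> b"
    and oth: "\<And>u. u \<in> A \<Longrightarrow> u \<noteq> a \<Longrightarrow> u \<noteq> b \<Longrightarrow> F u = c"
  shows "(\<Sum>u\<in>A. F u) = real (card A) * c + (F a - c) + (F b - c)"
proof -
  have "(\<Sum>u\<in>A. F u) = (\<Sum>u\<in>A. c + ((if u = a then F a - c else 0) + (if u = b then F b - c else 0)))"
    using oth ab by (intro sum.cong refl) auto
  also have "\<dots> = real (card A) * c + (F a - c) + (F b - c)"
    using fin a b by (simp add: sum.distrib)
  finally show ?thesis .
qed

lemma swap_part1:
  fixes G F P :: "'a \<Rightarrow> 'a \<Rightarrow> real"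
  shows "(\<Sum>a\<in>A. \<Sum>b\<in>A. G a b * (\<Sum>m\<in>A. P a m * F m b))
       = (\<Sum>x\<in>A. \<Sum>y\<in>A. F x y * (\<Sum>a\<in>A. G a y * P a x))"
proof -
  have "(\<Sum>a\<in>A. \<Sum>b\<in>A. G a b * (\<Sum>m\<in>A. P a m * F m b)) = (\<Sum>a\<in>A. \<Sum>b\<in>A. \<Sum>m\<in>A. G a b * P a m * F m b)"
    by (simp add: sum_distrib_left mult.assoc)
  also have "\<dots> = (\<Sum>b\<in>A. \<Sum>a\<in>A. \<Sum>m\<in>A. G a b * P a m * F m b)" by (rule sum.swap)
  also have "\<dots> = (\<Sum>b\<in>A. \<Sum>m\<in>A. \<Sum>a\<in>A. G a b * P a m * F m b)" by (rule sum.cong[OF refl], rule sum.swap)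
  also have "\<dots> = (\<Sum>m\<in>A. \<Sum>b\<in>A. \<Sum>a\<in>A. G a b * P a m * F m b)" by (rule sum.swap)
  also have "\<dots> = (\<Sum>x\<in>A. \<Sum>y\<in>A. F x y * (\<Sum>a\<in>A. G a y * P a x))"
    by (simp add: sum_distrib_left mult_ac)
  finally show ?thesis .
qed

lemma swap_part2:
  fixes G F P :: "'a \<Rightarrow> 'a \<Rightarrow> real"
  shows "(\<Sum>a\<in>A. \<Sum>b\<in>A. G a b * (\<Sum>m\<in>A. P b m * F a m))
       = (\<Sum>x\<in>A. \<Sum>y\<in>A. F x y * (\<Sum>b\<in>A. G x b * P b y))"
proof -
  have "(\<Sum>a\<in>A. \<Sum>b\<in>A. G a b * (\<Sum>m\<in>A. P b m * F a m)) = (\<Sum>a\<in>A. \<Sum>b\<in>A. \<Sum>m\<in>A. G a b * P b m * F a m)"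
    by (simp add: sum_distrib_left mult.assoc)
  also have "\<dots> = (\<Sum>a\<in>A. \<Sum>m\<in>A. \<Sum>b\<in>A. G a b * P b m * F a m)" by (rule sum.cong[OF refl], rule sum.swap)
  also have "\<dots> = (\<Sum>x\<in>A. \<Sum>y\<in>A. F x y * (\<Sum>b\<in>A. G x b * P b y))"
    by (simp add: sum_distrib_left mult_ac)
  finally show ?thesis .
qed

lemma swapK:
  fixes G F P :: "'a \<Rightarrow> 'a \<Rightarrow> real"
  shows "(\<Sum>a\<in>A. \<Sum>b\<in>A. G a b * ((\<Sum>m\<in>A. P a m * F m b) + (\<Sum>m\<in>A. P b m * F a m)))
       = (\<Sum>x\<in>A. \<Sum>y\<in>A. F x y * ((\<Sum>a\<in>A. G a y * P a x) + (\<Sum>b\<in>A. G x b * P b y)))"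
  using swap_part1[of G P F A] swap_part2[of G P F A]
  by (simp add: distrib_left sum.distrib)

locale derivS = nontriv V E w for V :: "'v set" and E :: "('v \<times> 'v) set" and w :: "'v \<Rightarrow> 'v \<Rightarrow> real" +
  fixes S :: "'v set" and J :: "'v \<times> 'v \<Rightarrow> real"
  assumes SV: "S \<subseteq> V"
    and J0: "\<And>x. x \<notin> St2 - B2 \<Longrightarrow> J x = 0"
    and Jeq: "\<And>x. x \<in> St2 - B2 \<Longrightarrow> J x = (\<Sum>j\<in>I2 x. c2 x j * J (f2 x j)) + srcJ S x"
begin

lemma J_diag: "J (a, a) = 0" by (rule J0) (simp add: B2_def)

lemma Jeq':
  assumes "x \<in> V" "y \<in> V" "x \<noteq> y"
  shows "(\<Sum>l\<in>V. P x l * J (l, y)) + (\<Sum>l\<in>V. P y l * J (x, l)) - 2 * J (x, y) = - (Cc S x y / (mu x * mu y))"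
proof -
  have "(x, y) \<in> St2 - B2" using assms by (simp add: St2_def B2_def)
  then have "J (x, y) = ((\<Sum>l\<in>V. P x l * J (l, y)) + (\<Sum>l\<in>V. P y l * J (x, l))) / 2 + srcJ S (x, y)"
    using Jeq sum2[of x y J] by simp
  moreover have "srcJ S (x, y) = (Cc S x y / (mu x * mu y)) / 2" by (simp add: srcJ_def)
  moreover have "\<And>A B Jv sv Cm :: real. Jv = (A + B) / 2 + sv \<Longrightarrow> sv = Cm / 2 \<Longrightarrow> A + B - 2 * Jv = - Cm"
    by (simp add: field_simps)
  ultimately show ?thesis by blast
qed

definition K :: "'v \<Rightarrow> 'v \<Rightarrow> real" where "K a b = mu a * mu b * J (a, b)"
definition qf :: "'v \<Rightarrow> 'v \<Rightarrow> 'v set \<Rightarrow> real" where "qf a b X = (if a \<in> X \<and> b \<notin> X then 1 else 0)"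
definition Phi :: "'v set \<Rightarrow> real" where "Phi X = (\<Sum>a\<in>V. \<Sum>b\<in>V. K a b * qf a b X)"
definition Dd :: "'v set \<Rightarrow> real" where "Dd X = (1 / n) * (\<Sum>u\<in>S. mu u * (alpha X u * (1 - alpha X u)))"

lemma K_diag: "K a a = 0" unfolding K_def using J_diag by simp

lemma q_step:
  assumes X: "X \<subseteq> V" and a: "a \<in> V" and b: "b \<in> V" and ab: "a \<noteq> b"
  shows "Qop S 0 X (qf a b) - qf a b X
     = (1 / n) * ((\<Sum>m\<in>V. P a m * qf m b X) + (\<Sum>m\<in>V. P b m * qf a m X) - 2 * qf a b X)"
proof -
  define T where "T u = alpha X u * qf a b (insert u X) + (1 - alpha X u) * qf a b (X - {u})" for u
  have Q: "Qop S 0 X (qf a b) = (1 / n) * (\<Sum>u\<in>V. T u)"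
    unfolding Qop_eq[OF X order.refl] Ad0 T_def ..
  have oth: "T u = qf a b X" if "u \<noteq> a" "u \<noteq> b" for u
    using that unfolding T_def qf_def by (auto simp: algebra_simps)
  have Ta: "T a = (\<Sum>m\<in>V. P a m * qf m b X)"
  proof -
    have "T a = (if b \<notin> X then alpha X a else 0)" unfolding T_def qf_def using ab by auto
    also have "\<dots> = (\<Sum>m\<in>V. P a m * qf m b X)"
    proof (cases "b \<in> X")
      case True then show ?thesis unfolding qf_def by simp
    next
      case False
      have "(\<Sum>m\<in>V. P a m * qf m b X) = (\<Sum>m\<in>V. if m \<in> X then P a m else 0)"
        unfolding qf_def using False by (intro sum.cong refl) auto
      also have "\<dots> = alpha X a" unfolding alpha_def by (rule ind_sum[OF X finV])
      finally show ?thesis using False by simp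
    qed
    finally show ?thesis .
  qed
  have Tb: "T b = (\<Sum>m\<in>V. P b m * qf a m X)"
  proof -
    have "T b = (if a \<in> X then 1 - alpha X b else 0)" unfolding T_def qf_def using ab by auto
    also have "\<dots> = (\<Sum>m\<in>V. P b m * qf a m X)"
    proof (cases "a \<in> X")
      case False then show ?thesis unfolding qf_def by simp
    next
      case True
      have "(\<Sum>m\<in>V. P b m * qf a m X) = (\<Sum>m\<in>V. if m \<in> V - X then P b m else 0)"
        unfolding qf_def using True by (intro sum.cong refl) auto
      also have "\<dots> = (\<Sum>m\<in>V - X. P b m)" by (rule ind_sum) (use finV in auto)
      also have "\<dots> = 1 - alpha X b" by (rule alpha_compl[OF X b])
      finally show ?thesis using True by simp
    qed
    finally show ?thesis .
  qed
  have "(\<Sum>u\<in>V. T u) = n * qf a b X + (T a - qf a b X) + (T b - qf a b X)"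
    by (rule sum_two[OF finV a b ab]) (use oth in auto)
  then show ?thesis unfolding Q Ta[symmetric] Tb[symmetric] using n_pos
    by (simp add: field_simps)
qed

lemma Phi_fun: "Phi = (\<lambda>Y. \<Sum>a\<in>V. \<Sum>b\<in>V. K a b * qf a b Y)"
  by (rule ext) (simp add: Phi_def)

lemma Qop_Phi: "Qop S' \<delta> X Phi = (\<Sum>a\<in>V. \<Sum>b\<in>V. K a b * Qop S' \<delta> X (qf a b))"
  unfolding Phi_fun Qop_sum Qop_scale ..

lemma rev1: "x \<in> V \<Longrightarrow> y \<in> V \<Longrightarrow> (\<Sum>a\<in>V. K a y * P a x) = mu x * mu y * (\<Sum>a\<in>V. P x a * J (a, y))"
proof -
  assume x: "x \<in> V" and y: "y \<in> V"
  have "(\<Sum>a\<in>V. K a y * P a x) = (\<Sum>a\<in>V. mu x * mu y * (P x a * J (a, y)))"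
  proof (intro sum.cong refl)
    fix a assume a: "a \<in> V"
    have "K a y * P a x = (mu a * P a x) * mu y * J (a, y)" unfolding K_def by (simp add: mult_ac)
    also have "\<dots> = (mu x * P x a) * mu y * J (a, y)" using mu_rev[OF a x] by simp
    finally show "K a y * P a x = mu x * mu y * (P x a * J (a, y))" by (simp add: mult_ac)
  qed
  then show ?thesis by (simp add: sum_distrib_left)
qed

lemma rev2: "x \<in> V \<Longrightarrow> y \<in> V \<Longrightarrow> (\<Sum>b\<in>V. K x b * P b y) = mu x * mu y * (\<Sum>b\<in>V. P y b * J (x, b))"
proof -
  assume x: "x \<in> V" and y: "y \<in> V"
  have "(\<Sum>b\<in>V. K x b * P b y) = (\<Sum>b\<in>V. mu x * mu y * (P y b * J (x, b)))"
  proof (intro sum.cong refl)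
    fix b assume b: "b \<in> V"
    have "K x b * P b y = mu x * (mu b * P b y) * J (x, b)" unfolding K_def by (simp add: mult_ac)
    also have "\<dots> = mu x * (mu y * P y b) * J (x, b)" using mu_rev[OF b y] by simp
    finally show "K x b * P b y = mu x * mu y * (P y b * J (x, b))" by (simp add: mult_ac)
  qed
  then show ?thesis by (simp add: sum_distrib_left)
qed

lemma Cc_q:
  assumes X: "X \<subseteq> V"
  shows "(\<Sum>x\<in>V. \<Sum>y\<in>V. qf x y X * Cc S x y) = (\<Sum>u\<in>S. mu u * (alpha X u * (1 - alpha X u)))"
proof -
  have "(\<Sum>x\<in>V. \<Sum>y\<in>V. qf x y X * Cc S x y) = (\<Sum>x\<in>V. \<Sum>y\<in>V. \<Sum>u\<in>S. qf x y X * (mu u * P u x * P u y))"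
    unfolding Cc_def by (simp add: sum_distrib_left)
  also have "\<dots> = (\<Sum>x\<in>V. \<Sum>u\<in>S. \<Sum>y\<in>V. qf x y X * (mu u * P u x * P u y))"
    by (rule sum.cong[OF refl], rule sum.swap)
  also have "\<dots> = (\<Sum>u\<in>S. \<Sum>x\<in>V. \<Sum>y\<in>V. qf x y X * (mu u * P u x * P u y))"
    by (rule sum.swap)
  also have "\<dots> = (\<Sum>u\<in>S. mu u * (alpha X u * (1 - alpha X u)))"
  proof (intro sum.cong refl)
    fix u assume u: "u \<in> S"
    then have uV: "u \<in> V" using SV by auto
    have pr: "mu u * ((\<Sum>x\<in>V. if x \<in> X then P u x else 0) * (\<Sum>y\<in>V. if y \<in> V - X then P u y else 0))
        = (\<Sum>x\<in>V. \<Sum>y\<in>V. mu u * ((if x \<in> X then P u x else 0) * (if y \<in> V - X then P u y else 0)))"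
      unfolding sum_product by (simp only: sum_distrib_left)
    have "(\<Sum>x\<in>V. \<Sum>y\<in>V. qf x y X * (mu u * P u x * P u y))
        = mu u * ((\<Sum>x\<in>V. if x \<in> X then P u x else 0) * (\<Sum>y\<in>V. if y \<in> V - X then P u y else 0))"
      unfolding pr by (intro sum.cong refl) (auto simp: qf_def)
    also have "(\<Sum>x\<in>V. if x \<in> X then P u x else 0) = alpha X u"
      unfolding alpha_def by (rule ind_sum[OF X finV])
    also have "(\<Sum>y\<in>V. if y \<in> V - X then P u y else 0) = 1 - alpha X u"
      using ind_sum[of "V - X" V "P u"] finV alpha_compl[OF X uV] by auto
    finally show "(\<Sum>x\<in>V. \<Sum>y\<in>V. qf x y X * (mu u * P u x * P u y)) = mu u * (alpha X u * (1 - alpha X u))" .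
  qed
  finally show ?thesis .
qed

lemma Phi_step:
  assumes X: "X \<subseteq> V"
  shows "Qop S 0 X Phi = Phi X - Dd X"
proof -
  let ?F = "\<lambda>x y. qf x y X"
  have "Qop S 0 X Phi - Phi X = (\<Sum>a\<in>V. \<Sum>b\<in>V. K a b * (Qop S 0 X (qf a b) - qf a b X))"
    unfolding Qop_Phi Phi_def by (simp add: right_diff_distrib sum_subtractf)
  also have "\<dots> = (\<Sum>a\<in>V. \<Sum>b\<in>V. (1 / n) * (K a b * ((\<Sum>m\<in>V. P a m * ?F m b) + (\<Sum>m\<in>V. P b m * ?F a m)))
       - (2 / n) * (K a b * ?F a b))"
  proof (intro sum.cong refl)
    fix a b assume a: "a \<in> V" and b: "b \<in> V"
    show "K a b * (Qop S 0 X (qf a b) - qf a b X) = (1 / n) * (K a b * ((\<Sum>m\<in>V. P a m * ?F m b) + (\<Sum>m\<in>V. P b m * ?F a m)))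
       - (2 / n) * (K a b * ?F a b)"
    proof (cases "a = b")
      case True then show ?thesis by (simp add: K_diag)
    next
      case False
      show ?thesis unfolding q_step[OF X a b False] by (simp add: algebra_simps)
    qed
  qed
  also have "\<dots> = (1 / n) * (\<Sum>a\<in>V. \<Sum>b\<in>V. K a b * ((\<Sum>m\<in>V. P a m * ?F m b) + (\<Sum>m\<in>V. P b m * ?F a m)))
       - (2 / n) * Phi X"
    unfolding Phi_def by (simp add: sum_subtractf sum_distrib_left)
  finally have S1: "Qop S 0 X Phi - Phi X = (1 / n) * (\<Sum>a\<in>V. \<Sum>b\<in>V. K a b * ((\<Sum>m\<in>V. P a m * ?F m b) + (\<Sum>m\<in>V. P b m * ?F a m)))
       - (2 / n) * Phi X" .
  have S2: "(\<Sum>a\<in>V. \<Sum>b\<in>V. K a b * ((\<Sum>m\<in>V. P a m * ?F m b) + (\<Sum>m\<in>V. P b m * ?F a m)))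
      = (\<Sum>x\<in>V. \<Sum>y\<in>V. ?F x y * ((\<Sum>a\<in>V. K a y * P a x) + (\<Sum>b\<in>V. K x b * P b y)))"
    by (rule swapK)
  have S3: "Phi X = (\<Sum>x\<in>V. \<Sum>y\<in>V. ?F x y * K x y)" unfolding Phi_def by (simp add: mult.commute)
  have S4: "(1 / n) * (\<Sum>a\<in>V. \<Sum>b\<in>V. K a b * ((\<Sum>m\<in>V. P a m * ?F m b) + (\<Sum>m\<in>V. P b m * ?F a m)))
       - (2 / n) * Phi X = (1 / n) * ((\<Sum>x\<in>V. \<Sum>y\<in>V. ?F x y * ((\<Sum>a\<in>V. K a y * P a x) + (\<Sum>b\<in>V. K x b * P b y)))
      - 2 * (\<Sum>x\<in>V. \<Sum>y\<in>V. ?F x y * K x y))"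
    unfolding S2 S3 by (simp add: algebra_simps)
  note A = trans[OF S1 S4]
  have B: "(\<Sum>x\<in>V. \<Sum>y\<in>V. ?F x y * ((\<Sum>a\<in>V. K a y * P a x) + (\<Sum>b\<in>V. K x b * P b y)))
      - 2 * (\<Sum>x\<in>V. \<Sum>y\<in>V. ?F x y * K x y)
      = (\<Sum>x\<in>V. \<Sum>y\<in>V. ?F x y * ((\<Sum>a\<in>V. K a y * P a x) + (\<Sum>b\<in>V. K x b * P b y) - 2 * K x y))"
    by (simp add: sum_subtractf sum_distrib_left algebra_simps)
  have C: "(\<Sum>x\<in>V. \<Sum>y\<in>V. ?F x y * ((\<Sum>a\<in>V. K a y * P a x) + (\<Sum>b\<in>V. K x b * P b y) - 2 * K x y))
      = (\<Sum>x\<in>V. \<Sum>y\<in>V. - (qf x y X * Cc S x y))"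
  proof (intro sum.cong refl)
    fix x y assume x: "x \<in> V" and y: "y \<in> V"
    show "?F x y * ((\<Sum>a\<in>V. K a y * P a x) + (\<Sum>b\<in>V. K x b * P b y) - 2 * K x y) = - (qf x y X * Cc S x y)"
    proof (cases "x = y")
      case True then show ?thesis by (simp add: qf_def)
    next
      case False
      have "(\<Sum>a\<in>V. K a y * P a x) + (\<Sum>b\<in>V. K x b * P b y) - 2 * K x y
          = mu x * mu y * ((\<Sum>l\<in>V. P x l * J (l, y)) + (\<Sum>l\<in>V. P y l * J (x, l)) - 2 * J (x, y))"
        unfolding rev1[OF x y] rev2[OF x y] by (simp add: K_def algebra_simps)
      also have "\<dots> = mu x * mu y * (- (Cc S x y / (mu x * mu y)))" unfolding Jeq'[OF x y False] ..
      also have "\<dots> = - Cc S x y" using mu_pos[OF x] mu_pos[OF y] by simp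
      finally show ?thesis by simp
    qed
  qed
  have "Qop S 0 X Phi - Phi X = (1 / n) * (- (\<Sum>u\<in>S. mu u * (alpha X u * (1 - alpha X u))))"
    unfolding A B C using Cc_q[OF X] by (simp add: sum_negf)
  then show ?thesis unfolding Dd_def by simp
qed

end


context derivS
begin

definition MPhi :: real where "MPhi = (\<Sum>a\<in>V. \<Sum>b\<in>V. \<bar>K a b\<bar>)"

lemma Phi_bound: "\<bar>Phi Y\<bar> \<le> MPhi"
proof -
  have "\<bar>Phi Y\<bar> \<le> (\<Sum>a\<in>V. \<bar>\<Sum>b\<in>V. K a b * qf a b Y\<bar>)" unfolding Phi_def by (rule sum_abs)
  also have "\<dots> \<le> (\<Sum>a\<in>V. \<Sum>b\<in>V. \<bar>K a b * qf a b Y\<bar>)" by (intro sum_mono sum_abs)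
  also have "\<dots> \<le> MPhi" unfolding MPhi_def
    by (intro sum_mono) (auto simp: qf_def abs_mult)
  finally show ?thesis .
qed

lemma MPhi_nonneg: "0 \<le> MPhi" unfolding MPhi_def by (intro sum_nonneg) auto

lemma Phi_empty: "Phi {} = 0" unfolding Phi_def qf_def by simp
lemma Phi_V: "Phi V = 0" unfolding Phi_def qf_def by (intro sum.neutral ballI) auto

definition sres :: "real \<Rightarrow> 'v set \<Rightarrow> real" where
  "sres \<delta> X = (1 / n) * (\<Sum>u\<in>V. mu u * (Ad S \<delta> X u - alpha X u - \<delta> * (if u \<in> S then alpha X u * (1 - alpha X u) else 0))
      + \<delta> * ((Ad S \<delta> X u - alpha X u) * (Phi (insert u X) - Phi (X - {u}))))"

lemma QPhi_diff:
  assumes X: "X \<subseteq> V" and d: "0 \<le> \<delta>"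
  shows "Qop S \<delta> X Phi - Qop S 0 X Phi = (1 / n) * (\<Sum>u\<in>V. (Ad S \<delta> X u - alpha X u) * (Phi (insert u X) - Phi (X - {u})))"
proof -
  let ?f = "\<lambda>u. Ad S \<delta> X u * Phi (insert u X) + (1 - Ad S \<delta> X u) * Phi (X - {u})"
  let ?g = "\<lambda>u. alpha X u * Phi (insert u X) + (1 - alpha X u) * Phi (X - {u})"
  have "Qop S \<delta> X Phi - Qop S 0 X Phi = (1 / n) * ((\<Sum>u\<in>V. ?f u) - (\<Sum>u\<in>V. ?g u))"
    unfolding Qop_eq[OF X d] Qop_eq[OF X order.refl] Ad0 by (simp add: right_diff_distrib)
  also have "(\<Sum>u\<in>V. ?f u) - (\<Sum>u\<in>V. ?g u) = (\<Sum>u\<in>V. ?f u - ?g u)" by (rule sum_subtractf[symmetric])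
  also have "\<dots> = (\<Sum>u\<in>V. (Ad S \<delta> X u - alpha X u) * (Phi (insert u X) - Phi (X - {u})))"
    by (intro sum.cong refl) (simp add: algebra_simps)
  finally show ?thesis .
qed

lemma Dd_V: "Dd X = (1 / n) * (\<Sum>u\<in>V. mu u * (if u \<in> S then alpha X u * (1 - alpha X u) else 0))"
proof -
  have "(\<Sum>u\<in>V. mu u * (if u \<in> S then alpha X u * (1 - alpha X u) else 0))
      = (\<Sum>u\<in>V. if u \<in> S then mu u * (alpha X u * (1 - alpha X u)) else 0)"
    by (intro sum.cong refl) auto
  also have "\<dots> = (\<Sum>u\<in>S. mu u * (alpha X u * (1 - alpha X u)))" by (rule ind_sum[OF SV finV])
  finally show ?thesis unfolding Dd_def by simp
qed

lemma resid_eq: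
  assumes X: "X \<subseteq> V" "X \<noteq> V" and d: "0 \<le> \<delta>"
  shows "(\<lambda>Y. fp_from V E w S \<delta> Y - Lf Y - \<delta> * Phi Y) X
     = Qop S \<delta> X (\<lambda>Y. fp_from V E w S \<delta> Y - Lf Y - \<delta> * Phi Y) + sres \<delta> X"
proof -
  let ?phi = "fp_from V E w S \<delta>"
  have Qr: "Qop S \<delta> X (\<lambda>Y. ?phi Y - Lf Y - \<delta> * Phi Y) = Qop S \<delta> X ?phi - Qop S \<delta> X Lf - \<delta> * Qop S \<delta> X Phi"
    unfolding Qop_diff Qop_scale ..
  have ph: "?phi X = Qop S \<delta> X ?phi" by (rule phi_eq[OF d X(2)])
  have QLX: "Qop S \<delta> X Lf - Lf X = (1 / n) * (\<Sum>u\<in>V. mu u * (Ad S \<delta> X u - alpha X u))"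
    using QL[OF X(1) d] by simp
  have QP: "Qop S \<delta> X Phi - Phi X = (1 / n) * (\<Sum>u\<in>V. (Ad S \<delta> X u - alpha X u) * (Phi (insert u X) - Phi (X - {u})))
       - (1 / n) * (\<Sum>u\<in>V. mu u * (if u \<in> S then alpha X u * (1 - alpha X u) else 0))"
    using QPhi_diff[OF X(1) d] Phi_step[OF X(1)] Dd_V[of X] by simp
  have "sres \<delta> X = (1 / n) * (\<Sum>u\<in>V. mu u * (Ad S \<delta> X u - alpha X u))
      + \<delta> * ((1 / n) * (\<Sum>u\<in>V. (Ad S \<delta> X u - alpha X u) * (Phi (insert u X) - Phi (X - {u})))
       - (1 / n) * (\<Sum>u\<in>V. mu u * (if u \<in> S then alpha X u * (1 - alpha X u) else 0)))"
    unfolding sres_def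
    by (simp add: sum.distrib sum_subtractf sum_distrib_left right_diff_distrib distrib_left mult_ac)
  then have "sres \<delta> X = (Qop S \<delta> X Lf - Lf X) + \<delta> * (Qop S \<delta> X Phi - Phi X)"
    unfolding QLX QP by simp
  then show ?thesis unfolding Qr using ph by (simp add: algebra_simps)
qed

lemma sres_bound:
  assumes X: "X \<subseteq> V" and d: "0 \<le> \<delta>" "\<delta> \<le> 1"
  shows "\<bar>sres \<delta> X\<bar> \<le> \<delta>\<^sup>2 * (1 + 2 * MPhi)"
proof -
  have tm: "\<bar>mu u * (Ad S \<delta> X u - alpha X u - \<delta> * (if u \<in> S then alpha X u * (1 - alpha X u) else 0))
      + \<delta> * ((Ad S \<delta> X u - alpha X u) * (Phi (insert u X) - Phi (X - {u})))\<bar> \<le> \<delta>\<^sup>2 * (1 + 2 * MPhi)" for u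
  proof -
    have a0: "0 \<le> alpha X u" and a1: "alpha X u \<le> 1" using alpha_nonneg alpha_le1[OF X] by auto
    have b1: "\<bar>Ad S \<delta> X u - alpha X u - \<delta> * (if u \<in> S then alpha X u * (1 - alpha X u) else 0)\<bar> \<le> \<delta>\<^sup>2"
      and b2: "\<bar>Ad S \<delta> X u - alpha X u\<bar> \<le> \<delta>"
    proof -
      show "\<bar>Ad S \<delta> X u - alpha X u - \<delta> * (if u \<in> S then alpha X u * (1 - alpha X u) else 0)\<bar> \<le> \<delta>\<^sup>2"
        using scalar_bounds(1)[OF a0 a1 d(1)] by (cases "u \<in> S") (simp_all add: Ad_S Ad_notS)
      show "\<bar>Ad S \<delta> X u - alpha X u\<bar> \<le> \<delta>"
        using scalar_bounds(2)[OF a0 a1 d(1)] d by (cases "u \<in> S") (simp_all add: Ad_S Ad_notS)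
    qed
    have m: "\<bar>mu u * (Ad S \<delta> X u - alpha X u - \<delta> * (if u \<in> S then alpha X u * (1 - alpha X u) else 0))\<bar> \<le> 1 * \<delta>\<^sup>2"
      unfolding abs_mult using mu_nonneg[of u] mu_le1[of u] b1 by (intro mult_mono) auto
    have pd: "\<bar>Phi (insert u X) - Phi (X - {u})\<bar> \<le> 2 * MPhi"
      using Phi_bound[of "insert u X"] Phi_bound[of "X - {u}"] by linarith
    have "\<bar>\<delta> * ((Ad S \<delta> X u - alpha X u) * (Phi (insert u X) - Phi (X - {u})))\<bar>
        = \<delta> * (\<bar>Ad S \<delta> X u - alpha X u\<bar> * \<bar>Phi (insert u X) - Phi (X - {u})\<bar>)"
      using d by (simp add: abs_mult)
    also have "\<dots> \<le> \<delta> * (\<delta> * (2 * MPhi))"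
      using d b2 pd by (intro mult_left_mono mult_mono) auto
    finally have p: "\<bar>\<delta> * ((Ad S \<delta> X u - alpha X u) * (Phi (insert u X) - Phi (X - {u})))\<bar> \<le> \<delta>\<^sup>2 * (2 * MPhi)"
      by (simp add: power2_eq_square mult_ac)
    show ?thesis using m p abs_triangle_ineq[of "mu u * (Ad S \<delta> X u - alpha X u - \<delta> * (if u \<in> S then alpha X u * (1 - alpha X u) else 0))"
        "\<delta> * ((Ad S \<delta> X u - alpha X u) * (Phi (insert u X) - Phi (X - {u})))"]
      by (simp add: algebra_simps)
  qed
  have "\<bar>sres \<delta> X\<bar> \<le> (1 / n) * (\<Sum>u\<in>V. \<delta>\<^sup>2 * (1 + 2 * MPhi))"
  proof -
    have an: "\<bar>1 / n\<bar> = 1 / n" using n_pos by simp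
    have sb: "\<bar>\<Sum>u\<in>V. mu u * (Ad S \<delta> X u - alpha X u - \<delta> * (if u \<in> S then alpha X u * (1 - alpha X u) else 0))
      + \<delta> * ((Ad S \<delta> X u - alpha X u) * (Phi (insert u X) - Phi (X - {u})))\<bar> \<le> (\<Sum>u\<in>V. \<delta>\<^sup>2 * (1 + 2 * MPhi))"
      by (rule order.trans[OF sum_abs]) (intro sum_mono tm)
    show ?thesis unfolding sres_def abs_mult an by (rule mult_left_mono[OF sb]) (use n_pos in simp)
  qed
  also have "\<dots> = \<delta>\<^sup>2 * (1 + 2 * MPhi)" using n_pos by simp
  finally show ?thesis .
qed

lemma resid_bound:
  assumes X: "X \<subseteq> V" and d: "0 \<le> \<delta>" "\<delta> \<le> 1"
  shows "\<bar>fp_from V E w S \<delta> X - Lf X - \<delta> * Phi X\<bar> \<le> n * (\<delta>\<^sup>2 * (1 + 2 * MPhi)) / eta1 ^ card V"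
proof -
  have "\<bar>(\<lambda>Y. fp_from V E w S \<delta> Y - Lf Y - \<delta> * Phi Y) X\<bar> \<le> n * (\<delta>\<^sup>2 * (1 + 2 * MPhi)) / eta1 ^ card V"
  proof (rule maxpC[OF d _ _ _ _ _ X, where s = "sres \<delta>"])
    show "0 \<le> \<delta>\<^sup>2 * (1 + 2 * MPhi)" using MPhi_nonneg by simp
    show "fp_from V E w S \<delta> {} - Lf {} - \<delta> * Phi {} = 0" using phi_empty[OF d(1)] Lf_empty Phi_empty by simp
    show "fp_from V E w S \<delta> V - Lf V - \<delta> * Phi V = 0" using phi_V[OF d(1)] Lf_V Phi_V by simp
    fix Y assume Y: "Y \<subseteq> V" "Y \<noteq> {}" "Y \<noteq> V"
    show "fp_from V E w S \<delta> Y - Lf Y - \<delta> * Phi Y = Qop S \<delta> Y (\<lambda>Y. fp_from V E w S \<delta> Y - Lf Y - \<delta> * Phi Y) + sres \<delta> Y"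
      using resid_eq[OF Y(1) Y(3) d(1)] by simp
    show "\<bar>sres \<delta> Y\<bar> \<le> \<delta>\<^sup>2 * (1 + 2 * MPhi)" by (rule sres_bound[OF Y(1) d])
  qed
  then show ?thesis by simp
qed

end


lemma deriv_from_bound:
  fixes f :: "real \<Rightarrow> real"
  assumes b: "\<And>\<delta>. 0 \<le> \<delta> \<Longrightarrow> \<delta> \<le> 1 \<Longrightarrow> \<bar>f \<delta> - f 0 - \<delta> * D\<bar> \<le> C * \<delta>\<^sup>2" and C: "0 \<le> C"
  shows "(f has_real_derivative D) (at 0 within {0..})"
proof -
  have "((\<lambda>y. (f y - f 0) / (y - 0)) \<longlongrightarrow> D) (at 0 within {0..})"
    unfolding tendsto_iff eventually_at
  proof (intro allI impI)
    fix e :: real assume e: "0 < e"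
    define d where "d = min 1 (e / (C + 1))"
    have d0: "0 < d" unfolding d_def using e C by simp
    show "\<exists>d>0. \<forall>y\<in>{0..}. y \<noteq> 0 \<and> dist y 0 < d \<longrightarrow> dist ((f y - f 0) / (y - 0)) D < e"
    proof (intro exI conjI ballI impI)
      show "0 < d" by (rule d0)
      fix y :: real assume y: "y \<in> {0..}" and yy: "y \<noteq> 0 \<and> dist y 0 < d"
      have y0: "0 < y" using y yy by auto
      have yd: "y < d" using yy y0 by (simp add: dist_real_def)
      have y1: "y \<le> 1" using yd unfolding d_def by linarith
      have ye: "y < e / (C + 1)" using yd unfolding d_def by linarith
      have "dist ((f y - f 0) / (y - 0)) D = \<bar>f y - f 0 - y * D\<bar> / y"
      proof -
        have "(f y - f 0) / (y - 0) - D = (f y - f 0 - y * D) / y" using y0 by (simp add: diff_divide_distrib)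
        then show ?thesis using y0 by (simp add: dist_real_def)
      qed
      also have "\<dots> \<le> C * y\<^sup>2 / y" using b[of y] y0 y1 by (intro divide_right_mono) auto
      also have "\<dots> = C * y" using y0 by (simp add: power2_eq_square)
      also have "\<dots> \<le> C * (e / (C + 1))" using ye C y0 by (intro mult_left_mono) auto
      also have "\<dots> < e"
      proof -
        have "C * (e / (C + 1)) = e * (C / (C + 1))" by simp
        also have "\<dots> < e * 1" using e C by (intro mult_strict_left_mono) auto
        finally show ?thesis by simp
      qed
      finally show "dist ((f y - f 0) / (y - 0)) D < e" .
    qed
  qed
  then show ?thesis by (simp add: has_field_derivative_iff)
qed

lemma deriv_unique0:
  fixes f :: "real \<Rightarrow> real"
  assumes "(f has_real_derivative D) (at 0 within {0..})"
  shows "(THE D. (f has_real_derivative D) (at 0 within {0..})) = D"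
proof (rule the_equality[where P = "\<lambda>D. (f has_real_derivative D) (at 0 within {0..})", OF assms])
  fix D' assume "(f has_real_derivative D') (at 0 within {0..})"
  then show "D' = D" using assms
    by (intro has_field_derivative_unique[of f D' 0 "{0..}" D]) (auto simp: at_within_Ici_at_right)
qed

context vgraph
begin

lemma psi_diag: "i \<in> V \<Longrightarrow> psi V E w i i = 0"
  using psi_ok[unfolded psi_prop_def, THEN conjunct2, THEN conjunct1] by (rule bspec)

lemma psi_eqn: "i \<in> V \<Longrightarrow> j \<in> V \<Longrightarrow> i \<noteq> j \<Longrightarrow>
    psi V E w i j = (1 + (\<Sum>l\<in>V. P i l * psi V E w l j + P j l * psi V E w i l)) / 2"
  using psi_ok[unfolded psi_prop_def, THEN conjunct2, THEN conjunct2] by (simp only: Ball_def) iprover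

end

context nontriv
begin

lemma piv_mu: "i \<in> V \<Longrightarrow> piv V E w i = mu i"
  unfolding piv_def using phi0_eq[of "{i}" "{}"] by (simp add: Lf_def)

end

context derivS
begin

definition Dv :: real where "Dv = (1 / n) * (\<Sum>u\<in>V. Phi {u})"

lemma fp_bound:
  assumes d: "0 \<le> \<delta>" "\<delta> \<le> 1"
  shows "\<bar>fp V E w S \<delta> - fp V E w S 0 - \<delta> * Dv\<bar> \<le> (n * (1 + 2 * MPhi) / eta1 ^ card V) * \<delta>\<^sup>2"
proof -
  have "fp V E w S \<delta> - fp V E w S 0 - \<delta> * Dv
      = (1 / n) * (\<Sum>u\<in>V. fp_from V E w S \<delta> {u} - Lf {u} - \<delta> * Phi {u})"
    unfolding fp_def Dv_def using phi0_eq[of _ S]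
    by (simp add: sum_subtractf sum_distrib_left right_diff_distrib)
  then have "\<bar>fp V E w S \<delta> - fp V E w S 0 - \<delta> * Dv\<bar>
      = (1 / n) * \<bar>\<Sum>u\<in>V. fp_from V E w S \<delta> {u} - Lf {u} - \<delta> * Phi {u}\<bar>"
    using n_pos by (simp add: abs_mult)
  also have "\<dots> \<le> (1 / n) * (\<Sum>u\<in>V. n * (\<delta>\<^sup>2 * (1 + 2 * MPhi)) / eta1 ^ card V)"
    using n_pos by (intro mult_left_mono order.trans[OF sum_abs] sum_mono resid_bound d) auto
  also have "\<dots> = (n * (1 + 2 * MPhi) / eta1 ^ card V) * \<delta>\<^sup>2" using n_pos by simp
  finally show ?thesis .
qed

lemma fp_deriv: "((\<lambda>\<delta>. fp V E w S \<delta>) has_real_derivative Dv) (at 0 within {0..})"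
proof (rule deriv_from_bound[OF fp_bound])
  show "0 \<le> n * (1 + 2 * MPhi) / eta1 ^ card V"
    using n_pos MPhi_nonneg eta1_pos by simp
qed

lemma Phi_single: "u \<in> V \<Longrightarrow> Phi {u} = (\<Sum>b\<in>V. K u b)"
proof -
  assume u: "u \<in> V"
  have "Phi {u} = (\<Sum>a\<in>V. if a = u then (\<Sum>b\<in>V. K u b) else 0)"
    unfolding Phi_def
  proof (intro sum.cong refl)
    fix a assume "a \<in> V"
    show "(\<Sum>b\<in>V. K a b * qf a b {u}) = (if a = u then (\<Sum>b\<in>V. K u b) else 0)"
      by (cases "a = u") (auto simp: qf_def K_diag intro!: sum.cong)
  qed
  also have "\<dots> = (\<Sum>b\<in>V. K u b)" using u finV by simp
  finally show ?thesis .
qed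

lemma psi_eq1:
  assumes "a \<in> V" "b \<in> V" "a \<noteq> b"
  shows "2 * psi V E w a b - ((\<Sum>m\<in>V. P a m * psi V E w m b) + (\<Sum>m\<in>V. P b m * psi V E w a m)) = 1"
proof -
  have "psi V E w a b = (1 + (\<Sum>l\<in>V. P a l * psi V E w l b + P b l * psi V E w a l)) / 2"
    by (rule psi_eqn[OF assms])
  then show ?thesis by (simp add: sum.distrib field_simps)
qed

lemma KPsi: "(\<Sum>a\<in>V. \<Sum>b\<in>V. K a b) = (\<Sum>x\<in>V. \<Sum>y\<in>V. psi V E w x y * Cc S x y)"
proof -
  let ?p = "psi V E w"
  have "(\<Sum>a\<in>V. \<Sum>b\<in>V. K a b) = (\<Sum>a\<in>V. \<Sum>b\<in>V. 2 * (K a b * ?p a b)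
      - K a b * ((\<Sum>m\<in>V. P a m * ?p m b) + (\<Sum>m\<in>V. P b m * ?p a m)))"
  proof (intro sum.cong refl)
    fix a b assume a: "a \<in> V" and b: "b \<in> V"
    show "K a b = 2 * (K a b * ?p a b) - K a b * ((\<Sum>m\<in>V. P a m * ?p m b) + (\<Sum>m\<in>V. P b m * ?p a m))"
    proof (cases "a = b")
      case True then show ?thesis by (simp add: K_diag)
    next
      case False
      have "K a b = K a b * (2 * ?p a b - ((\<Sum>m\<in>V. P a m * ?p m b) + (\<Sum>m\<in>V. P b m * ?p a m)))"
        using psi_eq1[OF a b False] by simp
      then show ?thesis by (simp add: algebra_simps)
    qed
  qed
  also have "\<dots> = 2 * (\<Sum>a\<in>V. \<Sum>b\<in>V. K a b * ?p a b)
      - (\<Sum>a\<in>V. \<Sum>b\<in>V. K a b * ((\<Sum>m\<in>V. P a m * ?p m b) + (\<Sum>m\<in>V. P b m * ?p a m)))"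
    by (simp add: sum_subtractf sum_distrib_left)
  also have "(\<Sum>a\<in>V. \<Sum>b\<in>V. K a b * ((\<Sum>m\<in>V. P a m * ?p m b) + (\<Sum>m\<in>V. P b m * ?p a m)))
      = (\<Sum>x\<in>V. \<Sum>y\<in>V. ?p x y * ((\<Sum>a\<in>V. K a y * P a x) + (\<Sum>b\<in>V. K x b * P b y)))"
    by (rule swapK)
  also have "2 * (\<Sum>a\<in>V. \<Sum>b\<in>V. K a b * ?p a b) - (\<Sum>x\<in>V. \<Sum>y\<in>V. ?p x y * ((\<Sum>a\<in>V. K a y * P a x) + (\<Sum>b\<in>V. K x b * P b y)))
      = (\<Sum>x\<in>V. \<Sum>y\<in>V. ?p x y * (2 * K x y - ((\<Sum>a\<in>V. K a y * P a x) + (\<Sum>b\<in>V. K x b * P b y))))"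
    by (simp add: sum_subtractf sum_distrib_left algebra_simps)
  also have "\<dots> = (\<Sum>x\<in>V. \<Sum>y\<in>V. ?p x y * Cc S x y)"
  proof (intro sum.cong refl)
    fix x y assume x: "x \<in> V" and y: "y \<in> V"
    show "?p x y * (2 * K x y - ((\<Sum>a\<in>V. K a y * P a x) + (\<Sum>b\<in>V. K x b * P b y))) = ?p x y * Cc S x y"
    proof (cases "x = y")
      case True
      have "?p x x = 0" by (rule psi_diag[OF x])
      then show ?thesis using True by simp
    next
      case False
      have "2 * K x y - ((\<Sum>a\<in>V. K a y * P a x) + (\<Sum>b\<in>V. K x b * P b y))
          = - (mu x * mu y * ((\<Sum>l\<in>V. P x l * J (l, y)) + (\<Sum>l\<in>V. P y l * J (x, l)) - 2 * J (x, y)))"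
        unfolding rev1[OF x y] rev2[OF x y] by (simp add: K_def algebra_simps)
      also have "\<dots> = - (mu x * mu y * (- (Cc S x y / (mu x * mu y))))" unfolding Jeq'[OF x y False] ..
      also have "\<dots> = Cc S x y" using mu_pos[OF x] mu_pos[OF y] by simp
      finally show ?thesis by simp
    qed
  qed
  finally show ?thesis .
qed

lemma Cc_hfun: "(\<Sum>x\<in>V. \<Sum>y\<in>V. psi V E w x y * Cc S x y) = (\<Sum>j\<in>S. hfun V E w j)"
proof -
  let ?p = "psi V E w"
  have "(\<Sum>x\<in>V. \<Sum>y\<in>V. ?p x y * Cc S x y) = (\<Sum>x\<in>V. \<Sum>y\<in>V. \<Sum>j\<in>S. mu j * P j x * P j y * ?p x y)"
    unfolding Cc_def by (simp add: sum_distrib_left sum_distrib_right mult_ac)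
  also have "\<dots> = (\<Sum>x\<in>V. \<Sum>j\<in>S. \<Sum>y\<in>V. mu j * P j x * P j y * ?p x y)"
    by (rule sum.cong[OF refl], rule sum.swap)
  also have "\<dots> = (\<Sum>j\<in>S. \<Sum>x\<in>V. \<Sum>y\<in>V. mu j * P j x * P j y * ?p x y)"
    by (rule sum.swap)
  also have "\<dots> = (\<Sum>j\<in>S. hfun V E w j)"
  proof (intro sum.cong refl)
    fix j assume "j \<in> S"
    then have j: "j \<in> V" using SV by auto
    show "(\<Sum>x\<in>V. \<Sum>y\<in>V. mu j * P j x * P j y * ?p x y) = hfun V E w j"
      unfolding hfun_def
    proof (intro sum.cong refl)
      fix x y assume x: "x \<in> V" and "y \<in> V"
      have "piv V E w x * P x j = mu j * P j x" using piv_mu[OF x] mu_rev[OF x j] by simp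
      then show "mu j * P j x * P j y * ?p x y = piv V E w x * P x j * P j y * ?p x y" by simp
    qed
  qed
  finally show ?thesis .
qed

lemma Dv_eq: "Dv = (1 / n) * (\<Sum>j\<in>S. hfun V E w j)"
proof -
  have "(\<Sum>u\<in>V. Phi {u}) = (\<Sum>a\<in>V. \<Sum>b\<in>V. K a b)" by (intro sum.cong refl Phi_single)
  then show ?thesis unfolding Dv_def KPsi Cc_hfun by simp
qed

end


lemma topk:
  fixes h :: "'a \<Rightarrow> real"
  assumes fin: "finite V" and T: "T \<subseteq> V" and S: "S \<subseteq> V" and c: "card S = card T"
    and dom: "\<forall>j\<in>T. \<forall>l\<in>V - T. h l \<le> h j"
  shows "(\<Sum>j\<in>S. h j) \<le> (\<Sum>j\<in>T. h j)"
proof -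
  have finS: "finite S" and finT: "finite T" using fin S T finite_subset by auto
  have s1: "(\<Sum>j\<in>S. h j) = (\<Sum>j\<in>S \<inter> T. h j) + (\<Sum>j\<in>S - T. h j)"
    using finS by (rule sum.Int_Diff)
  have s2: "(\<Sum>j\<in>T. h j) = (\<Sum>j\<in>S \<inter> T. h j) + (\<Sum>j\<in>T - S. h j)"
    using sum.Int_Diff[OF finT, of h S] by (simp add: Int_commute)
  have cS: "card S = card (S \<inter> T) + card (S - T)" using card_Int_Diff[OF finS, of T] by simp
  have cT: "card T = card (S \<inter> T) + card (T - S)" using card_Int_Diff[OF finT, of S] by (simp add: Int_commute)
  have cc: "card (S - T) = card (T - S)" using c cS cT by simp
  have "(\<Sum>j\<in>S - T. h j) \<le> (\<Sum>j\<in>T - S. h j)"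
  proof (cases "T - S = {}")
    case True
    then have "card (S - T) = 0" using cc by (simp only: card.empty)
    then have "S - T = {}" using finS by simp
    then show ?thesis using True by simp
  next
    case False
    define m where "m = Min (h ` (T - S))"
    have fTS: "finite (T - S)" using finT by simp
    have le: "h l \<le> m" if "l \<in> S - T" for l
    proof -
      have "h l \<le> h j" if "j \<in> T - S" for j using dom that \<open>l \<in> S - T\<close> S by auto
      then show ?thesis unfolding m_def using False fTS by (subst Min_ge_iff) auto
    qed
    have ge: "m \<le> h j" if "j \<in> T - S" for j unfolding m_def using fTS that by simp
    have "(\<Sum>j\<in>S - T. h j) \<le> of_nat (card (S - T)) * m" by (rule sum_bounded_above) (use le in auto)
    also have "\<dots> = of_nat (card (T - S)) * m" using cc by simp
    also have "\<dots> \<le> (\<Sum>j\<in>T - S. h j)" by (rule sum_bounded_below) (use ge in auto)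
    finally show ?thesis .
  qed
  then show ?thesis using s1 s2 by linarith
qed

theorem mainTheorem11:
  fixes V :: "'v set" and E :: "('v \<times> 'v) set" and w :: "'v \<Rightarrow> 'v \<Rightarrow> real"
  assumes "wgraph V E w"
    and "strongly_connected V E"
    and "symmetric_weights E w"
  shows "(\<forall>S\<subseteq>V. ((\<lambda>\<delta>. fp V E w S \<delta>) has_real_derivative
              (1 / real (card V)) * (\<Sum>j\<in>S. hfun V E w j)) (at 0 within {0..}))
    \<and> (\<forall>k T. T \<subseteq> V \<and> card T = k \<and> (\<forall>j\<in>T. \<forall>l\<in>V - T. hfun V E w l \<le> hfun V E w j)
          \<longrightarrow> (\<forall>S\<subseteq>V. card S = k \<longrightarrow> fp_deriv0 V E w S \<le> fp_deriv0 V E w T))"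
proof -
  interpret vgraph V E w using assms by (unfold_locales)
  have D: "((\<lambda>\<delta>. fp V E w S \<delta>) has_real_derivative
              (1 / real (card V)) * (\<Sum>j\<in>S. hfun V E w j)) (at 0 within {0..})" if SV: "S \<subseteq> V" for S
  proof (cases "\<exists>a\<in>V. \<exists>b\<in>V. a \<noteq> b")
    case True
    interpret nontriv V E w by (unfold_locales) (rule True)
    obtain J where J: "(\<forall>x. x \<notin> St2 - B2 \<longrightarrow> J x = 0) \<and>
       (\<forall>x\<in>St2 - B2. J x = (\<Sum>j\<in>I2 x. c2 x j * J (f2 x j)) + srcJ S x)"
      using J_exists[of S] by blast
    interpret derivS V E w S J by (unfold_locales) (use SV J in auto)
    show ?thesis using fp_deriv Dv_eq by simp
  next
    case False
    obtain a where a: "a \<in> V" using Vne by auto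
    have Va: "V = {a}" using False a by auto
    have fp1: "fp V E w S \<delta> = 1" if "0 \<le> \<delta>" for \<delta>
      unfolding fp_def using phi_V[OF that, of S] Va by simp
    have h0: "hfun V E w j = 0" if "j \<in> S" for j
      unfolding hfun_def using Va psi_diag[OF a] by simp
    have "((\<lambda>\<delta>. fp V E w S \<delta>) has_real_derivative 0) (at 0 within {0..})"
      by (rule deriv_from_bound[where C = 0]) (simp_all add: fp1)
    then show ?thesis using h0 by simp
  qed
  have FD: "fp_deriv0 V E w S = (1 / real (card V)) * (\<Sum>j\<in>S. hfun V E w j)" if "S \<subseteq> V" for S
    unfolding fp_deriv0_def by (rule deriv_unique0[OF D[OF that]])
  show ?thesis
  proof (intro conjI allI impI ballI)
    fix S assume "S \<subseteq> V" then show "((\<lambda>\<delta>. fp V E w S \<delta>) has_real_derivative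
              (1 / real (card V)) * (\<Sum>j\<in>S. hfun V E w j)) (at 0 within {0..})" by (rule D)
  next
    fix k T S
    assume H: "T \<subseteq> V \<and> card T = k \<and> (\<forall>j\<in>T. \<forall>l\<in>V - T. hfun V E w l \<le> hfun V E w j)"
      and S: "S \<subseteq> V" and cS: "card S = k"
    have "(\<Sum>j\<in>S. hfun V E w j) \<le> (\<Sum>j\<in>T. hfun V E w j)"
      by (rule topk[OF finV]) (use H S cS in auto)
    have TV: "T \<subseteq> V" using H by simp
    then show "fp_deriv0 V E w S \<le> fp_deriv0 V E w T"
      unfolding FD[OF S] FD[OF TV] using \<open>(\<Sum>j\<in>S. hfun V E w j) \<le> (\<Sum>j\<in>T. hfun V E w j)\<close>
      by (intro mult_left_mono) auto
  qed
qed

end
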